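(* Let $S$ be a square-free semigroup, $D$ a division ring, $(\alpha,\xi)\in Z^2(S,D^* )$ a normal 2-cocycle and $R=D^{\alpha}_{\xi}S$. Then the map $\Lambda: H^1_{(\alpha,\xi)}(S,D^* )\to\mathrm{Out}\,R$ given by $B^1_{(\alpha,\xi)}(S,D^* )\,(\mu,\eta)\mapsto(\mathrm{Inn}\,R)\,\sigma_{\mu\eta}$ for $(\mu,\eta)\in Z^1_{(\alpha,\xi)}(S,D^* )$ is a monomorphism (injective group homomorphism).
   Context: $D$ is a division ring, $D^*$ its group of units, $\mathrm{Aut}(D)$ its ring automorphism group, $\rho_d(x)=dxd^{-1}$, $1_D$ the identity of $\mathrm{Aut}(D)$. A square-free semigroup is a semigroup $S$ (product $s\cdot t$) with zero $\theta$ and a finite set $E\subseteq S$ of nonzero pairwise orthogonal idempotents with $S=\bigcup_{e,f\in E}e\cdot S\cdot f$ and $|e\cdot S\cdot f\setminus\{\theta\}|\le 1$; $S^*=S\setminus\{\theta\}$ and each $s\in S^*$ equals $e\cdot s\cdot f$ for unique $e,f\in E$. $S^{<0>}=E$, $S^{<n>}=\{(s_1,\dots,s_n)\in S^n:s_1\cdots s_n\ne\theta\}$, $F^n(S,G)$ the group of functions $S^{<n>}\to G$; $\alpha_s=\alpha(s)$, $\mu_e=\mu(e)$. A 2-cocycle is $(\alpha,\xi)\in F^1(S,\mathrm{Aut}(D))\times F^2(S,D^* )$ with $\alpha_s(\xi(t,u))\xi(s,t\cdot u)=\xi(s,t)\xi(s\cdot t,u)$ on $S^{<3>}$ and $\alpha_s\circ\alpha_t=\rho_{\xi(s,t)}\circ\alpha_{s\cdot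 t}$ on $S^{<2>}$; $Z^2(S,D^* )$ is their set; normal means $\alpha_e=1_D$, $\xi(e,e)=1$ for $e\in E$. $D^{\alpha}_{\xi}S$ is the ring which is the left $D$-vector space with basis $S^*$, multiplication extended by distributivity from $(d_1s)(d_2t)=d_1\alpha_s(d_2)\xi(s,t)(s\cdot t)$ if $s\cdot t\ne\theta$, $0$ otherwise. $\mathrm{Aut}\,R$ is the ring automorphism group, $\mathrm{Inn}\,R$ the normal subgroup of conjugations $x\mapsto rxr^{-1}$ by units $r$, $\mathrm{Out}\,R=\mathrm{Aut}\,R/\mathrm{Inn}\,R$. $Z^1_{(\alpha,\xi)}(S,D^* )$ is the subgroup of $F^0(S,\mathrm{Aut}(D))\ltimes F^1(S,D^* )$ of pairs $(\mu,\eta)$ with $\mu_e\circ\alpha_s\circ\mu_f^{-1}=\rho_{\eta(s)}\circ\alpha_s$ for all $s=e\cdot s\cdot f\in S^*$ and $\mu_e(\xi(s,t))=\eta(s)\alpha_s(\eta(t))\xi(s,t)\eta(s\cdot t)^{-1}$ for all $(s,t)\in S^{<2>}$ with $s=e\cdot s$. $B^1_{(\alpha,\xi)}(S,D^* )$ is the normal subgroup of $Z^1_{(\alpha,\xi)}(S,D^* )$ consisting of the pairs $(\mu,\eta)$ for which there is $\epsilon\in F^0(S,D^* )$ with $\mu_e=\rho_{\epsilon(e)}$ for all $e\in E$ and $\eta(s)=\epsilon(e)\alpha_s(\epsilon(f)^{-1})$ for all $s=e\cdot s\cdot f\in S^*$. $H^1_{(\alpha,\xi)}(S,D^* )=Z^1_{(\alpha,\xi)}(S,D^*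 )/B^1_{(\alpha,\xi)}(S,D^* )$. For $(\mu,\eta)\in Z^1_{(\alpha,\xi)}(S,D^* )$, $\sigma_{\mu\eta}:R\to R$ is the additive map with $\sigma_{\mu\eta}(ds)=\mu_e(d)\eta(s)s$ for $d\in D$, $s=e\cdot s\in S^*$; it is a ring automorphism of $R$. *)

theory Defs
  imports "HOL-Algebra.Algebra"
begin

text \<open>The semigroup S is the whole type 's, with product m, zero th and the finite
set E of idempotents.\<close>

definition sqfree_sg :: "('s \<Rightarrow> 's \<Rightarrow> 's) \<Rightarrow> 's \<Rightarrow> 's set \<Rightarrow> bool" where
  "sqfree_sg m th E \<longleftrightarrow>
     (\<forall>a b c. m (m a b) c = m a (m b c)) \<and>
     (\<forall>a. m th a = th \<and> m a th = th) \<and>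
     finite E \<and> th \<notin> E \<and>
     (\<forall>e\<in>E. m e e = e) \<and>
     (\<forall>e\<in>E. \<forall>f\<in>E. e \<noteq> f \<longrightarrow> m e f = th) \<and>
     (\<forall>s. \<exists>e\<in>E. \<exists>f\<in>E. \<exists>t. s = m (m e t) f) \<and>
     (\<forall>e\<in>E. \<forall>f\<in>E. \<forall>t t'. m (m e t) f \<noteq> th \<longrightarrow> m (m e t') f \<noteq> th
          \<longrightarrow> m (m e t) f = m (m e t') f)"

definition sg_lft :: "('s \<Rightarrow> 's \<Rightarrow> 's) \<Rightarrow> 's set \<Rightarrow> 's \<Rightarrow> 's" where
  "sg_lft m E s = (THE e. e \<in> E \<and> m e s = s)"

definition sg_rgt :: "('s \<Rightarrow> 's \<Rightarrow> 's) \<Rightarrow> 's set \<Rightarrow> 's \<Rightarrow> 's" where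
  "sg_rgt m E s = (THE f. f \<in> E \<and> m s f = s)"

definition autD :: "('d::division_ring \<Rightarrow> 'd) \<Rightarrow> bool" where
  "autD g \<longleftrightarrow> bij g \<and> (\<forall>x y. g (x + y) = g x + g y) \<and> (\<forall>x y. g (x * y) = g x * g y) \<and> g 1 = 1"

definition rho :: "'d::division_ring \<Rightarrow> 'd \<Rightarrow> 'd" where
  "rho d = (\<lambda>x. d * x * inverse d)"

definition cocycle2 :: "('s \<Rightarrow> 's \<Rightarrow> 's) \<Rightarrow> 's \<Rightarrow> ('s \<Rightarrow> 'd::division_ring \<Rightarrow> 'd) \<Rightarrow> ('s \<Rightarrow> 's \<Rightarrow> 'd) \<Rightarrow> bool" where
  "cocycle2 m th \<alpha> \<xi> \<longleftrightarrow>
     (\<forall>s. s \<noteq> th \<longrightarrow> autD (\<alpha> s)) \<and>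
     (\<forall>s t. m s t \<noteq> th \<longrightarrow> \<xi> s t \<noteq> 0) \<and>
     (\<forall>s t u. m (m s t) u \<noteq> th \<longrightarrow> \<alpha> s (\<xi> t u) * \<xi> s (m t u) = \<xi> s t * \<xi> (m s t) u) \<and>
     (\<forall>s t. m s t \<noteq> th \<longrightarrow> \<alpha> s \<circ> \<alpha> t = rho (\<xi> s t) \<circ> \<alpha> (m s t))"

definition normal_cocycle :: "'s set \<Rightarrow> ('s \<Rightarrow> 'd::division_ring \<Rightarrow> 'd) \<Rightarrow> ('s \<Rightarrow> 's \<Rightarrow> 'd) \<Rightarrow> bool" where
  "normal_cocycle E \<alpha> \<xi> \<longleftrightarrow> (\<forall>e\<in>E. \<alpha> e = id \<and> \<xi> e e = 1)"

text \<open>Elements of R are functions S \<Rightarrow> D vanishing at the zero th (coefficients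
with respect to the basis S*; S is finite).\<close>

definition Rmul :: "('s \<Rightarrow> 's \<Rightarrow> 's) \<Rightarrow> 's \<Rightarrow> ('s \<Rightarrow> 'd::division_ring \<Rightarrow> 'd) \<Rightarrow> ('s \<Rightarrow> 's \<Rightarrow> 'd)
     \<Rightarrow> ('s \<Rightarrow> 'd) \<Rightarrow> ('s \<Rightarrow> 'd) \<Rightarrow> ('s \<Rightarrow> 'd)" where
  "Rmul m th \<alpha> \<xi> x y = (\<lambda>u. if u = th then 0 else
      (\<Sum>(s, t)\<in>{(s, t). m s t = u}. x s * \<alpha> s (y t) * \<xi> s t))"

definition Rcarrier :: "'s \<Rightarrow> ('s \<Rightarrow> 'd::zero) set" where
  "Rcarrier th = {x. x th = 0}"

definition Rone :: "('s \<Rightarrow> 's \<Rightarrow> 's) \<Rightarrow> 's \<Rightarrow> ('s \<Rightarrow> 'd::division_ring \<Rightarrow> 'd) \<Rightarrow> ('s \<Rightarrow> 's \<Rightarrow> 'd) \<Rightarrow> ('s \<Rightarrow> 'd)" where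
  "Rone m th \<alpha> \<xi> = (THE u. u \<in> Rcarrier th \<and>
      (\<forall>x\<in>Rcarrier th. Rmul m th \<alpha> \<xi> u x = x \<and> Rmul m th \<alpha> \<xi> x u = x))"

definition Rring :: "('s \<Rightarrow> 's \<Rightarrow> 's) \<Rightarrow> 's \<Rightarrow> ('s \<Rightarrow> 'd::division_ring \<Rightarrow> 'd) \<Rightarrow> ('s \<Rightarrow> 's \<Rightarrow> 'd) \<Rightarrow> ('s \<Rightarrow> 'd) ring" where
  "Rring m th \<alpha> \<xi> = \<lparr>carrier = Rcarrier th, monoid.mult = Rmul m th \<alpha> \<xi>, monoid.one = Rone m th \<alpha> \<xi>,
      ring.zero = (\<lambda>_. 0), ring.add = (\<lambda>x y s. x s + y s)\<rparr>"

definition AutR :: "('s \<Rightarrow> 'd) ring \<Rightarrow> (('s \<Rightarrow> 'd) \<Rightarrow> ('s \<Rightarrow> 'd)) monoid" where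
  "AutR R = (BijGroup (carrier R)) \<lparr>carrier := {g \<in> Bij (carrier R). g \<in> ring_iso R R}\<rparr>"

definition InnR :: "('s \<Rightarrow> 'd) ring \<Rightarrow> (('s \<Rightarrow> 'd) \<Rightarrow> ('s \<Rightarrow> 'd)) set" where
  "InnR R = {restrict (\<lambda>x. r \<otimes>\<^bsub>R\<^esub> x \<otimes>\<^bsub>R\<^esub> inv\<^bsub>R\<^esub> r) (carrier R) | r. r \<in> Units R}"

text \<open>Elements of F^0(S,Aut D) x F^1(S,D^*) are pairs (mu, eta) with mu e = id for
e outside E and eta th = 1 (canonical values outside the domains).\<close>

definition Z1set :: "('s \<Rightarrow> 's \<Rightarrow> 's) \<Rightarrow> 's \<Rightarrow> 's set \<Rightarrow> ('s \<Rightarrow> 'd::division_ring \<Rightarrow> 'd) \<Rightarrow> ('s \<Rightarrow> 's \<Rightarrow> 'd)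
    \<Rightarrow> (('s \<Rightarrow> 'd \<Rightarrow> 'd) \<times> ('s \<Rightarrow> 'd)) set" where
  "Z1set m th E \<alpha> \<xi> = {(\<mu>, \<eta>).
      (\<forall>e\<in>E. autD (\<mu> e)) \<and> (\<forall>e. e \<notin> E \<longrightarrow> \<mu> e = id) \<and>
      (\<forall>s. s \<noteq> th \<longrightarrow> \<eta> s \<noteq> 0) \<and> \<eta> th = 1 \<and>
      (\<forall>s. s \<noteq> th \<longrightarrow> \<mu> (sg_lft m E s) \<circ> \<alpha> s \<circ> inv_into UNIV (\<mu> (sg_rgt m E s)) = rho (\<eta> s) \<circ> \<alpha> s) \<and>
      (\<forall>s t. m s t \<noteq> th \<longrightarrow>
         \<mu> (sg_lft m E s) (\<xi> s t) = \<eta> s * \<alpha> s (\<eta> t) * \<xi> s t * inverse (\<eta> (m s t)))}"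

text \<open>Semidirect product multiplication (the one making sigma a homomorphism).\<close>
definition Z1grp :: "('s \<Rightarrow> 's \<Rightarrow> 's) \<Rightarrow> 's \<Rightarrow> 's set \<Rightarrow> ('s \<Rightarrow> 'd::division_ring \<Rightarrow> 'd) \<Rightarrow> ('s \<Rightarrow> 's \<Rightarrow> 'd)
    \<Rightarrow> (('s \<Rightarrow> 'd \<Rightarrow> 'd) \<times> ('s \<Rightarrow> 'd)) monoid" where
  "Z1grp m th E \<alpha> \<xi> = \<lparr>carrier = Z1set m th E \<alpha> \<xi>,
      monoid.mult = (\<lambda>(\<mu>, \<eta>) (\<mu>', \<eta>'). (\<lambda>e. \<mu> e \<circ> \<mu>' e,
                 \<lambda>s. if s = th then 1 else \<mu> (sg_lft m E s) (\<eta>' s) * \<eta> s)),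
      monoid.one = (\<lambda>e. id, \<lambda>s. 1)\<rparr>"

definition B1set :: "('s \<Rightarrow> 's \<Rightarrow> 's) \<Rightarrow> 's \<Rightarrow> 's set \<Rightarrow> ('s \<Rightarrow> 'd::division_ring \<Rightarrow> 'd) \<Rightarrow> ('s \<Rightarrow> 's \<Rightarrow> 'd)
    \<Rightarrow> (('s \<Rightarrow> 'd \<Rightarrow> 'd) \<times> ('s \<Rightarrow> 'd)) set" where
  "B1set m th E \<alpha> \<xi> = {(\<mu>, \<eta>) \<in> Z1set m th E \<alpha> \<xi>. \<exists>\<epsilon>.
      (\<forall>e\<in>E. \<epsilon> e \<noteq> 0 \<and> \<mu> e = rho (\<epsilon> e)) \<and>
      (\<forall>s. s \<noteq> th \<longrightarrow> \<eta> s = \<epsilon> (sg_lft m E s) * \<alpha> s (inverse (\<epsilon> (sg_rgt m E s))))}"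

definition sigma :: "('s \<Rightarrow> 's \<Rightarrow> 's) \<Rightarrow> 's \<Rightarrow> 's set \<Rightarrow> ('s \<Rightarrow> 'd::division_ring \<Rightarrow> 'd) \<Rightarrow> ('s \<Rightarrow> 'd)
    \<Rightarrow> ('s \<Rightarrow> 'd) \<Rightarrow> ('s \<Rightarrow> 'd)" where
  "sigma m th E \<mu> \<eta> = restrict (\<lambda>x s. if s = th then 0 else \<mu> (sg_lft m E s) (x s) * \<eta> s) (Rcarrier th)"

definition Lambda :: "('s \<Rightarrow> 's \<Rightarrow> 's) \<Rightarrow> 's \<Rightarrow> 's set \<Rightarrow> ('s \<Rightarrow> 'd::division_ring \<Rightarrow> 'd) \<Rightarrow> ('s \<Rightarrow> 's \<Rightarrow> 'd)
    \<Rightarrow> (('s \<Rightarrow> 'd \<Rightarrow> 'd) \<times> ('s \<Rightarrow> 'd)) set \<Rightarrow> (('s \<Rightarrow> 'd) \<Rightarrow> ('s \<Rightarrow> 'd)) set" where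
  "Lambda m th E \<alpha> \<xi> C = (let z = (SOME z. z \<in> C) in
      InnR (Rring m th \<alpha> \<xi>) #>\<^bsub>AutR (Rring m th \<alpha> \<xi>)\<^esub> sigma m th E (fst z) (snd z))"

end

theory Submission
  imports Defs
begin

lemma inv_assoc1[simp]: "(a::'d::division_ring) \<noteq> 0 \<Longrightarrow> inverse a * (a * x) = x"
  by (simp add: mult.assoc[symmetric])
lemma inv_assoc2[simp]: "(a::'d::division_ring) \<noteq> 0 \<Longrightarrow> a * (inverse a * x) = x"
  by (simp add: mult.assoc[symmetric])

lemma autD_add: "autD g \<Longrightarrow> g (x + y) = g x + g y" by (simp add: autD_def)
lemma autD_mult: "autD g \<Longrightarrow> g (x * y) = g x * g y" by (simp add: autD_def)
lemma autD_one: "autD g \<Longrightarrow> g 1 = 1" by (simp add: autD_def)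
lemma autD_bij: "autD g \<Longrightarrow> bij g" by (simp add: autD_def)
lemma autD_zero: "autD g \<Longrightarrow> g 0 = 0"
proof -
  assume a: "autD g"
  have "g (0 + 0) = g 0 + g 0" by (rule autD_add[OF a])
  thus ?thesis by simp
qed
lemma autD_inj: "autD g \<Longrightarrow> g x = g y \<Longrightarrow> x = y"
  using autD_bij bij_def inj_def by metis
lemma autD_nz: "autD g \<Longrightarrow> x \<noteq> 0 \<Longrightarrow> g x \<noteq> 0"
  using autD_inj autD_zero by metis
lemma autD_inverse: "autD g \<Longrightarrow> g (inverse x) = inverse (g x)"
proof (cases "x = 0")
  case True
  assume "autD g" thus ?thesis using True autD_zero[of g] by simp
next
  case False
  assume a: "autD g"
  have "g x * g (inverse x) = 1" using a False by (metis autD_mult autD_one right_inverse)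
  thus ?thesis by (metis mult_cancel_left inverse_unique)
qed
lemma autD_minus: "autD g \<Longrightarrow> g (- x) = - g x"
proof -
  assume a: "autD g"
  have "g (- x) + g x = 0" using a by (metis autD_add autD_zero add.left_inverse)
  thus ?thesis by (simp add: eq_neg_iff_add_eq_0)
qed
lemma autD_sum: "autD g \<Longrightarrow> g (sum f A) = (\<Sum>a\<in>A. g (f a))"
proof (induction A rule: infinite_finite_induct)
  case (infinite A) thus ?case using autD_zero by simp
next
  case empty thus ?case using autD_zero by simp
next
  case (insert x F) thus ?case by (simp add: autD_add)
qed
lemma autD_inv_into: "autD g \<Longrightarrow> inv_into UNIV g (g x) = x"
  using autD_bij bij_def inv_into_f_f by (metis UNIV_I)
lemma autD_f_inv_into: "autD g \<Longrightarrow> g (inv_into UNIV g x) = x"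
  using autD_bij bij_def by (metis f_inv_into_f surj_def UNIV_I rangeI)

lemma rho_mult: "rho (a::'d::division_ring) (x * y) = rho a x * rho a y" if "a \<noteq> 0"
  using that by (simp add: rho_def mult.assoc)
lemma rho_add: "rho (a::'d::division_ring) (x + y) = rho a x + rho a y"
  by (simp add: rho_def algebra_simps)
lemma rho_comp: "a \<noteq> 0 \<Longrightarrow> b \<noteq> 0 \<Longrightarrow> rho (a::'d::division_ring) (rho b x) = rho (a * b) x"
  by (simp add: rho_def mult.assoc nonzero_inverse_mult_distrib)
lemma rho_one: "rho (1::'d::division_ring) = id" by (simp add: rho_def fun_eq_iff)
lemma rho_inv: "(a::'d::division_ring) \<noteq> 0 \<Longrightarrow> rho (inverse a) (rho a x) = x"
  by (simp add: rho_def mult.assoc)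
lemma rho_inv': "(a::'d::division_ring) \<noteq> 0 \<Longrightarrow> rho a (rho (inverse a) x) = x"
  by (simp add: rho_def mult.assoc)
lemma autD_rho: "(a::'d::division_ring) \<noteq> 0 \<Longrightarrow> autD (rho a)"
  unfolding autD_def
proof (intro conjI allI)
  assume a: "a \<noteq> 0"
  show "bij (rho a)" by (rule o_bij[where g="rho (inverse a)"]) (auto simp: fun_eq_iff rho_inv rho_inv' a)
  show "rho a 1 = 1" using a by (simp add: rho_def)
next
  fix x y assume "a \<noteq> 0" thus "rho a (x * y) = rho a x * rho a y" by (rule rho_mult)
qed (simp_all add: rho_add)
lemma inv_rho: "(a::'d::division_ring) \<noteq> 0 \<Longrightarrow> inv_into UNIV (rho a) = rho (inverse a)"
  by (rule inv_equality) (auto simp: rho_inv rho_inv')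


locale SQ =
  fixes m :: "'s \<Rightarrow> 's \<Rightarrow> 's" and th :: 's and E :: "'s set"
    and \<alpha> :: "'s \<Rightarrow> 'd::division_ring \<Rightarrow> 'd" and \<xi> :: "'s \<Rightarrow> 's \<Rightarrow> 'd"
  assumes sq: "sqfree_sg m th E"
    and cc: "cocycle2 m th \<alpha> \<xi>"
    and nc: "normal_cocycle E \<alpha> \<xi>"
begin

abbreviation "lft \<equiv> sg_lft m E"
abbreviation "rgt \<equiv> sg_rgt m E"

lemma assoc: "m (m a b) c = m a (m b c)" using sq by (simp add: sqfree_sg_def)
lemma zl[simp]: "m th a = th" using sq by (simp add: sqfree_sg_def)
lemma zr[simp]: "m a th = th" using sq by (simp add: sqfree_sg_def)
lemma finE: "finite E" using sq by (simp add: sqfree_sg_def)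
lemma thE[simp]: "th \<notin> E" using sq by (simp add: sqfree_sg_def)
lemma idem: "e \<in> E \<Longrightarrow> m e e = e" using sq by (simp add: sqfree_sg_def)
lemma orth: "e \<in> E \<Longrightarrow> f \<in> E \<Longrightarrow> e \<noteq> f \<Longrightarrow> m e f = th" using sq by (simp add: sqfree_sg_def)
lemma cover: "\<exists>e\<in>E. \<exists>f\<in>E. \<exists>t. s = m (m e t) f" using sq unfolding sqfree_sg_def by blast
lemma uniq: "e \<in> E \<Longrightarrow> f \<in> E \<Longrightarrow> m (m e t) f \<noteq> th \<Longrightarrow> m (m e t') f \<noteq> th
          \<Longrightarrow> m (m e t) f = m (m e t') f" using sq unfolding sqfree_sg_def by blast

lemma decomp: "\<exists>e\<in>E. \<exists>f\<in>E. m e s = s \<and> m s f = s"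
proof -
  obtain e f t where ef: "e \<in> E" "f \<in> E" "s = m (m e t) f" using cover by blast
  have "m e s = s" using ef by (simp add: assoc[symmetric] idem)
  moreover have "m s f = s" using ef by (simp add: assoc idem)
  ultimately show ?thesis using ef by blast
qed

lemma left_unique: "e \<in> E \<Longrightarrow> e' \<in> E \<Longrightarrow> m e s = s \<Longrightarrow> m e' s \<noteq> th \<Longrightarrow> e' = e"
  by (metis assoc orth zl)

lemma right_unique: "f \<in> E \<Longrightarrow> f' \<in> E \<Longrightarrow> m s f = s \<Longrightarrow> m s f' \<noteq> th \<Longrightarrow> f' = f"
  by (metis assoc orth zr)

lemma lft: "s \<noteq> th \<Longrightarrow> lft s \<in> E \<and> m (lft s) s = s"
proof -
  assume s: "s \<noteq> th"
  obtain e where e: "e \<in> E" "m e s = s" using decomp by blast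
  have "(THE e. e \<in> E \<and> m e s = s) = e"
    by (rule the_equality) (use e s left_unique in auto)
  thus ?thesis using e by (simp add: sg_lft_def)
qed

lemma rgt: "s \<noteq> th \<Longrightarrow> rgt s \<in> E \<and> m s (rgt s) = s"
proof -
  assume s: "s \<noteq> th"
  obtain f where f: "f \<in> E" "m s f = s" using decomp by blast
  have "(THE f. f \<in> E \<and> m s f = s) = f"
    by (rule the_equality) (use f s right_unique in auto)
  thus ?thesis using f by (simp add: sg_rgt_def)
qed

lemma lftE: "s \<noteq> th \<Longrightarrow> lft s \<in> E" using lft by blast
lemma rgtE: "s \<noteq> th \<Longrightarrow> rgt s \<in> E" using rgt by blast

lemma m_left: "s \<noteq> th \<Longrightarrow> e \<in> E \<Longrightarrow> m e s = (if e = lft s then s else th)"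
  using lft left_unique by metis

lemma m_right: "s \<noteq> th \<Longrightarrow> f \<in> E \<Longrightarrow> m s f = (if f = rgt s then s else th)"
  using rgt right_unique by metis

lemma prod_nz: "m s t \<noteq> th \<Longrightarrow> s \<noteq> th \<and> t \<noteq> th"
  by auto

lemma prod_mid: "m s t \<noteq> th \<Longrightarrow> rgt s = lft t"
proof -
  assume a: "m s t \<noteq> th"
  hence s: "s \<noteq> th" and t: "t \<noteq> th" by auto
  have "m s t = m s (m (rgt s) t)" using rgt[OF s] by (metis assoc)
  thus ?thesis using a m_left[OF t rgtE[OF s]] by (auto split: if_splits)
qed

lemma prod_lft: "m s t \<noteq> th \<Longrightarrow> lft (m s t) = lft s"
proof -
  assume a: "m s t \<noteq> th"
  hence s: "s \<noteq> th" by auto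
  have "m (lft s) (m s t) = m s t" using lft[OF s] by (metis assoc)
  thus ?thesis using m_left[OF a lftE[OF s]] a by (auto split: if_splits)
qed

lemma prod_rgt: "m s t \<noteq> th \<Longrightarrow> rgt (m s t) = rgt t"
proof -
  assume a: "m s t \<noteq> th"
  hence t: "t \<noteq> th" by auto
  have "m (m s t) (rgt t) = m s t" using rgt[OF t] by (metis assoc)
  thus ?thesis using m_right[OF a rgtE[OF t]] a by (auto split: if_splits)
qed

lemma E_nz: "e \<in> E \<Longrightarrow> e \<noteq> th" using thE by blast

lemma lft_E[simp]: "e \<in> E \<Longrightarrow> lft e = e"
  using m_left[OF E_nz] idem E_nz by metis
lemma rgt_E[simp]: "e \<in> E \<Longrightarrow> rgt e = e"
  using m_right[OF E_nz] idem E_nz by metis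

lemma st_eq: "s \<noteq> th \<Longrightarrow> s' \<noteq> th \<Longrightarrow> lft s = lft s' \<Longrightarrow> rgt s = rgt s' \<Longrightarrow> s = s'"
proof -
  assume a: "s \<noteq> th" "s' \<noteq> th" "lft s = lft s'" "rgt s = rgt s'"
  have 1: "s = m (m (lft s) s) (rgt s)" using lft[OF a(1)] rgt[OF a(1)] by simp
  have 2: "s' = m (m (lft s) s') (rgt s)" using lft[OF a(2)] rgt[OF a(2)] a by simp
  show ?thesis using uniq[OF lftE[OF a(1)] rgtE[OF a(1)], of s s'] 1 2 a by metis
qed

lemma diag_elem: "s \<noteq> th \<Longrightarrow> lft s = rgt s \<Longrightarrow> s \<in> E"
  using st_eq[of s "lft s"] lftE by (metis lft_E rgt_E E_nz)

lemma finite_S: "finite (UNIV :: 's set)"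
proof -
  have "inj_on (\<lambda>s. (lft s, rgt s)) (UNIV - {th})"
    by (auto intro!: inj_onI st_eq)
  moreover have "(\<lambda>s. (lft s, rgt s)) ` (UNIV - {th}) \<subseteq> E \<times> E" using lftE rgtE by auto
  ultimately have "finite (UNIV - {th})" using inj_on_finite finE by blast
  thus ?thesis by simp
qed

section \<open>Cocycle facts\<close>

lemma alpha_aut: "s \<noteq> th \<Longrightarrow> autD (\<alpha> s)" using cc by (simp add: cocycle2_def)
lemma xi_nz: "m s t \<noteq> th \<Longrightarrow> \<xi> s t \<noteq> 0" using cc by (simp add: cocycle2_def)
lemma coc: "m (m s t) u \<noteq> th \<Longrightarrow> \<alpha> s (\<xi> t u) * \<xi> s (m t u) = \<xi> s t * \<xi> (m s t) u"
  using cc by (simp add: cocycle2_def)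
lemma coc2: "m s t \<noteq> th \<Longrightarrow> \<alpha> s (\<alpha> t x) = rho (\<xi> s t) (\<alpha> (m s t) x)"
  using cc unfolding cocycle2_def by (metis comp_apply)
lemma alpha_E[simp]: "e \<in> E \<Longrightarrow> \<alpha> e = id" using nc by (simp add: normal_cocycle_def)
lemma xi_EE: "e \<in> E \<Longrightarrow> \<xi> e e = 1" using nc by (simp add: normal_cocycle_def)

lemma idem_cancel: "(x::'d) \<noteq> 0 \<Longrightarrow> x * x = x \<Longrightarrow> x = 1"
  by (metis mult_cancel_left mult.right_neutral)

lemma xi_left: "s \<noteq> th \<Longrightarrow> \<xi> (lft s) s = 1"
proof -
  assume s: "s \<noteq> th"
  let ?e = "lft s"
  have e: "?e \<in> E" "m ?e s = s" using lft[OF s] by auto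
  have "m (m ?e ?e) s \<noteq> th" using e s idem by simp
  from coc[OF this] have "\<xi> ?e s * \<xi> ?e s = \<xi> ?e s" using e idem xi_EE by simp
  thus ?thesis using xi_nz[of ?e s] e s idem_cancel by simp
qed

lemma xi_right: "s \<noteq> th \<Longrightarrow> \<xi> s (rgt s) = 1"
proof -
  assume s: "s \<noteq> th"
  let ?f = "rgt s"
  have f: "?f \<in> E" "m s ?f = s" using rgt[OF s] by auto
  have "m (m s ?f) ?f \<noteq> th" using f s by simp
  from coc[OF this] have "\<xi> s ?f = \<xi> s ?f * \<xi> s ?f" using f idem xi_EE autD_one[OF alpha_aut[OF s]] by simp
  thus ?thesis using xi_nz[of s ?f] f s idem_cancel by simp
qed

end

definition diag :: "'s set \<Rightarrow> ('s \<Rightarrow> 'd::zero) \<Rightarrow> 's \<Rightarrow> 'd" where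
  "diag E \<epsilon> = (\<lambda>s. if s \<in> E then \<epsilon> s else 0)"

lemma sum_pairs: "(\<Sum>p\<in>(UNIV::('s\<times>'s) set). h (fst p) (snd p)) = (\<Sum>s\<in>UNIV. \<Sum>t\<in>UNIV. (h s t::'d::comm_monoid_add))"
  by (simp add: sum.cartesian_product' flip: UNIV_Times_UNIV)

context SQ begin

abbreviation "mul \<equiv> Rmul m th \<alpha> \<xi>"

declare finite_S[simp]

lemma mul_th[simp]: "mul x y th = 0" by (simp add: Rmul_def)

lemma mul_alt: "u \<noteq> th \<Longrightarrow> mul x y u = (\<Sum>s\<in>UNIV. \<Sum>t\<in>UNIV. if m s t = u then x s * \<alpha> s (y t) * \<xi> s t else 0)"
proof -
  assume u: "u \<noteq> th"
  have fin: "finite (UNIV :: ('s \<times> 's) set)" using finite_S by (simp add: finite_prod)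
  have "mul x y u = (\<Sum>p\<in>{p \<in> UNIV. m (fst p) (snd p) = u}. x (fst p) * \<alpha> (fst p) (y (snd p)) * \<xi> (fst p) (snd p))"
    using u unfolding Rmul_def by (auto intro!: sum.cong simp: case_prod_beta)
  also have "\<dots> = (\<Sum>p\<in>UNIV. if m (fst p) (snd p) = u then x (fst p) * \<alpha> (fst p) (y (snd p)) * \<xi> (fst p) (snd p) else 0)"
    by (rule sum.inter_filter[OF fin])
  also have "\<dots> = (\<Sum>s\<in>UNIV. \<Sum>t\<in>UNIV. if m s t = u then x s * \<alpha> s (y t) * \<xi> s t else 0)"
    by (rule sum_pairs)
  finally show ?thesis .
qed

lemma sum_fun_delta: "f = (\<lambda>t. if t = a then c else 0) \<Longrightarrow> sum f (UNIV::'s set) = (c::'d)"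
  by (simp add: sum.delta[OF finite_S])

lemma mul_diag_left: "mul (diag E \<epsilon>) x u = (if u = th then 0 else \<epsilon> (lft u) * x u)"
proof (cases "u = th")
  case False
  have inner: "(\<Sum>t\<in>UNIV. if m s t = u then diag E \<epsilon> s * \<alpha> s (x t) * \<xi> s t else 0)
      = (if s = lft u then \<epsilon> (lft u) * x u else 0)" for s
  proof (cases "s \<in> E")
    case True
    have "(\<lambda>t. if m s t = u then diag E \<epsilon> s * \<alpha> s (x t) * \<xi> s t else 0)
        = (\<lambda>t. if t = u then (if s = lft u then \<epsilon> (lft u) * x u else 0) else 0)"
    proof
      fix t
      show "(if m s t = u then diag E \<epsilon> s * \<alpha> s (x t) * \<xi> s t else 0)
        = (if t = u then (if s = lft u then \<epsilon> (lft u) * x u else 0) else 0)"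
      proof (cases "t = th")
        case True thus ?thesis using False by simp
      next
        case t: False
        have mst: "m s t = (if s = lft t then t else th)" by (rule m_left[OF t True])
        show ?thesis
        proof (cases "s = lft t")
          case st: True
          show ?thesis
          proof (cases "t = u")
            case tu: True
            have "\<xi> s u = 1" using xi_left[OF False] st tu by simp
            thus ?thesis using st tu mst \<open>s \<in> E\<close> by (simp add: diag_def)
          next
            case tu: False
            thus ?thesis using st mst by simp
          qed
        next
          case st: False
          hence "m s t = th" using mst by simp
          moreover have "t = u \<Longrightarrow> s \<noteq> lft u" using st by simp
          ultimately show ?thesis using False by auto
        qed
      qed
    qed
    thus ?thesis by (rule sum_fun_delta)
  next
    case nE: False
    hence "s \<noteq> lft u" using lftE[OF False] by auto
    thus ?thesis using nE by (auto simp: diag_def intro!: sum.neutral)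
  qed
  show ?thesis using False by (simp add: mul_alt inner)
qed (simp)

lemma mul_diag_right: "mul x (diag E \<epsilon>) u = (if u = th then 0 else x u * \<alpha> u (\<epsilon> (rgt u)))"
proof (cases "u = th")
  case False
  have inner: "(\<Sum>t\<in>UNIV. if m s t = u then x s * \<alpha> s (diag E \<epsilon> t) * \<xi> s t else 0)
      = (if s = u then x u * \<alpha> u (\<epsilon> (rgt u)) else 0)" for s
  proof -
    have "(\<lambda>t. if m s t = u then x s * \<alpha> s (diag E \<epsilon> t) * \<xi> s t else 0)
        = (\<lambda>t. if t = rgt u then (if s = u then x u * \<alpha> u (\<epsilon> (rgt u)) else 0) else 0)"
    proof
      fix t
      show "(if m s t = u then x s * \<alpha> s (diag E \<epsilon> t) * \<xi> s t else 0)
        = (if t = rgt u then (if s = u then x u * \<alpha> u (\<epsilon> (rgt u)) else 0) else 0)"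
      proof (cases "s = th")
        case True
        hence "m s t = th" by simp
        thus ?thesis using False \<open>s = th\<close> by simp
      next
        case s: False
        show ?thesis
        proof (cases "t \<in> E")
          case tE: True
          have mst: "m s t = (if t = rgt s then s else th)" by (rule m_right[OF s tE])
          show ?thesis
          proof (cases "t = rgt s")
            case ts: True
            show ?thesis
            proof (cases "s = u")
              case su: True
              have "\<xi> u t = 1" using xi_right[OF False] ts su by simp
              thus ?thesis using ts su mst tE by (simp add: diag_def)
            next
              case su: False
              thus ?thesis using ts mst by simp
            qed
          next
            case ts: False
            hence "m s t = th" using mst by simp
            moreover have "t = rgt u \<Longrightarrow> s \<noteq> u" using ts by auto
            ultimately show ?thesis using False by auto
          qed
        next
          case nE: False
          have "t \<noteq> rgt u" using rgtE[OF False] nE by auto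
          moreover have "diag E \<epsilon> t = 0" using nE by (simp add: diag_def)
          ultimately show ?thesis using autD_zero[OF alpha_aut[OF s]] by simp
        qed
      qed
    qed
    thus ?thesis by (rule sum_fun_delta)
  qed
  show ?thesis using False by (simp add: mul_alt inner)
qed (simp)

definition "one0 = diag E (\<lambda>_. (1::'d))"

lemma one0_th[simp]: "one0 th = 0" by (simp add: one0_def diag_def)

lemma mul_one0_left: "x th = 0 \<Longrightarrow> mul one0 x = x"
  by (rule ext) (auto simp: one0_def mul_diag_left)

lemma mul_one0_right: "x th = 0 \<Longrightarrow> mul x one0 = x"
  by (rule ext) (auto simp: one0_def mul_diag_right autD_one[OF alpha_aut])

lemma Rone_eq: "Rone m th \<alpha> \<xi> = one0"
  unfolding Rone_def
proof (rule the_equality)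
  show "one0 \<in> Rcarrier th \<and> (\<forall>x\<in>Rcarrier th. mul one0 x = x \<and> mul x one0 = x)"
    by (simp add: Rcarrier_def mul_one0_left mul_one0_right)
  fix u assume "u \<in> Rcarrier th \<and> (\<forall>x\<in>Rcarrier th. mul u x = x \<and> mul x u = x)"
  hence u0: "u th = 0" and h: "mul u one0 = one0" by (auto simp: Rcarrier_def)
  have "mul u one0 = u" by (rule mul_one0_right[of u, OF u0])
  thus "u = one0" using h by simp
qed

lemma sum_if_delta: "(\<Sum>w\<in>UNIV. if m w u = v \<and> P w then F w else 0) = (if m a u = v \<and> P a then F a else 0)"
  if "\<And>w. P w \<longleftrightarrow> w = a" for F :: "'s \<Rightarrow> 'd"
proof -
  have "(\<lambda>w. if m w u = v \<and> P w then F w else 0) = (\<lambda>w. if w = a then (if m a u = v \<and> P a then F a else 0) else 0)"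
    using that by auto
  hence "(\<Sum>w\<in>UNIV. if m w u = v \<and> P w then F w else 0) = (\<Sum>w\<in>UNIV. if w = a then (if m a u = v \<and> P a then F a else 0) else 0)"
    by (simp only:)
  also have "\<dots> = (if m a u = v \<and> P a then F a else 0)"
    by (simp only: sum.delta[OF finite_S] UNIV_I if_True)
  finally show ?thesis .
qed

end

context SQ begin
lemma sdelta: "(\<Sum>w\<in>(UNIV::'s set). if P w \<and> a = w then c w else (0::'d)) = (if P a then c a else 0)"
proof -
  have "(\<lambda>w. if P w \<and> a = w then c w else 0) = (\<lambda>w. if w = a then (if P a then c a else 0) else 0)"
    by auto
  thus ?thesis by (rule sum_fun_delta)
qed

lemma mul_assoc: "mul (mul x y) z = mul x (mul y z)"
proof
  fix v
  show "mul (mul x y) z v = mul x (mul y z) v"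
  proof (cases "v = th")
    case True thus ?thesis by simp
  next
    case v: False
    define F where "F = (\<lambda>s t u. x s * \<alpha> s (y t) * \<xi> s t * \<alpha> (m s t) (z u) * \<xi> (m s t) u)"
    define G where "G = (\<lambda>s t u. x s * \<alpha> s (y t * \<alpha> t (z u) * \<xi> t u) * \<xi> s (m t u))"
    have "mul (mul x y) z v = (\<Sum>w\<in>UNIV. \<Sum>u\<in>UNIV. \<Sum>s\<in>UNIV. \<Sum>t\<in>UNIV.
        if m w u = v \<and> m s t = w then F s t u else 0)"
    proof -
      have "(if m w u = v then mul x y w * \<alpha> w (z u) * \<xi> w u else 0) =
         (\<Sum>s\<in>UNIV. \<Sum>t\<in>UNIV. if m w u = v \<and> m s t = w then F s t u else 0)" for w u
      proof (cases "m w u = v")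
        case True
        hence w: "w \<noteq> th" using v by auto
        show ?thesis using True
          by (simp add: mul_alt[OF w] sum_distrib_right F_def cong: if_cong)
             (intro sum.cong refl, auto)
      qed simp
      thus ?thesis using v by (simp add: mul_alt)
    qed
    also have "\<dots> = (\<Sum>s\<in>UNIV. \<Sum>t\<in>UNIV. \<Sum>u\<in>UNIV. \<Sum>w\<in>UNIV.
        if m w u = v \<and> m s t = w then F s t u else 0)"
    proof -
      let ?H = "\<lambda>w u s t. if m w u = v \<and> m s t = w then F s t u else 0"
      have "(\<Sum>w\<in>UNIV. \<Sum>u\<in>UNIV. \<Sum>s\<in>UNIV. \<Sum>t\<in>UNIV. ?H w u s t) = (\<Sum>u\<in>UNIV. \<Sum>w\<in>UNIV. \<Sum>s\<in>UNIV. \<Sum>t\<in>UNIV. ?H w u s t)"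
        by (rule sum.swap)
      also have "\<dots> = (\<Sum>u\<in>UNIV. \<Sum>s\<in>UNIV. \<Sum>w\<in>UNIV. \<Sum>t\<in>UNIV. ?H w u s t)"
        by (rule sum.cong[OF refl], rule sum.swap)
      also have "\<dots> = (\<Sum>u\<in>UNIV. \<Sum>s\<in>UNIV. \<Sum>t\<in>UNIV. \<Sum>w\<in>UNIV. ?H w u s t)"
        by (rule sum.cong[OF refl], rule sum.cong[OF refl], rule sum.swap)
      also have "\<dots> = (\<Sum>s\<in>UNIV. \<Sum>u\<in>UNIV. \<Sum>t\<in>UNIV. \<Sum>w\<in>UNIV. ?H w u s t)"
        by (rule sum.swap)
      also have "\<dots> = (\<Sum>s\<in>UNIV. \<Sum>t\<in>UNIV. \<Sum>u\<in>UNIV. \<Sum>w\<in>UNIV. ?H w u s t)"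
        by (rule sum.cong[OF refl], rule sum.swap)
      finally show ?thesis .
    qed
    also have "\<dots> = (\<Sum>s\<in>UNIV. \<Sum>t\<in>UNIV. \<Sum>u\<in>UNIV. if m (m s t) u = v then F s t u else 0)"
      by (intro sum.cong refl) (rule sdelta)
    also have "\<dots> = (\<Sum>s\<in>UNIV. \<Sum>t\<in>UNIV. \<Sum>u\<in>UNIV. if m (m s t) u = v then G s t u else 0)"
    proof (intro sum.cong refl)
      fix s t u
      show "(if m (m s t) u = v then F s t u else 0) = (if m (m s t) u = v then G s t u else 0)"
      proof (cases "m (m s t) u = v")
        case True
        hence ne: "m (m s t) u \<noteq> th" using v by simp
        have st: "m s t \<noteq> th" using ne by (metis zl)
        have s: "s \<noteq> th" using st by (metis zl)
        have tu: "m t u \<noteq> th" using ne by (metis assoc zl zr)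
        have a: "autD (\<alpha> s)" by (rule alpha_aut[OF s])
        have "G s t u = x s * \<alpha> s (y t) * \<alpha> s (\<alpha> t (z u)) * (\<alpha> s (\<xi> t u) * \<xi> s (m t u))"
          by (simp add: G_def autD_mult[OF a] mult.assoc)
        also have "\<dots> = x s * \<alpha> s (y t) * (\<xi> s t * \<alpha> (m s t) (z u) * inverse (\<xi> s t)) * (\<xi> s t * \<xi> (m s t) u)"
          by (simp add: coc[OF ne] coc2[OF st] rho_def)
        also have "\<dots> = F s t u" using xi_nz[OF st] by (simp add: F_def mult.assoc)
        finally show ?thesis by simp
      qed simp
    qed
    also have "\<dots> = (\<Sum>s\<in>UNIV. \<Sum>t\<in>UNIV. \<Sum>u\<in>UNIV. if m s (m t u) = v then G s t u else 0)"
      by (simp only: assoc)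
    also have "\<dots> = (\<Sum>s\<in>UNIV. \<Sum>t\<in>UNIV. \<Sum>u\<in>UNIV. \<Sum>w\<in>UNIV.
        if m s w = v \<and> m t u = w then G s t u else 0)"
    proof (intro sum.cong refl)
      fix s t u
      show "(if m s (m t u) = v then G s t u else 0) = (\<Sum>w\<in>UNIV. if m s w = v \<and> m t u = w then G s t u else 0)"
        by (rule sdelta[of "\<lambda>w. m s w = v" "m t u" "\<lambda>_. G s t u", symmetric])
    qed
    also have "\<dots> = (\<Sum>s\<in>UNIV. \<Sum>w\<in>UNIV. \<Sum>t\<in>UNIV. \<Sum>u\<in>UNIV.
        if m s w = v \<and> m t u = w then G s t u else 0)"
    proof -
      let ?H = "\<lambda>s w t u. if m s w = v \<and> m t u = w then G s t u else 0"
      have "(\<Sum>s\<in>UNIV. \<Sum>t\<in>UNIV. \<Sum>u\<in>UNIV. \<Sum>w\<in>UNIV. ?H s w t u) = (\<Sum>s\<in>UNIV. \<Sum>t\<in>UNIV. \<Sum>w\<in>UNIV. \<Sum>u\<in>UNIV. ?H s w t u)"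
        by (rule sum.cong[OF refl], rule sum.cong[OF refl], rule sum.swap)
      also have "\<dots> = (\<Sum>s\<in>UNIV. \<Sum>w\<in>UNIV. \<Sum>t\<in>UNIV. \<Sum>u\<in>UNIV. ?H s w t u)"
        by (rule sum.cong[OF refl], rule sum.swap)
      finally show ?thesis .
    qed
    also have "\<dots> = mul x (mul y z) v"
    proof -
      have "(if m s w = v then x s * \<alpha> s (mul y z w) * \<xi> s w else 0) =
         (\<Sum>t\<in>UNIV. \<Sum>u\<in>UNIV. if m s w = v \<and> m t u = w then G s t u else 0)" for s w
      proof (cases "m s w = v")
        case True
        hence w: "w \<noteq> th" and s: "s \<noteq> th" using v by auto
        have a: "autD (\<alpha> s)" by (rule alpha_aut[OF s])
        have "x s * \<alpha> s (mul y z w) * \<xi> s w = (\<Sum>t\<in>UNIV. \<Sum>u\<in>UNIV. x s * \<alpha> s (if m t u = w then y t * \<alpha> t (z u) * \<xi> t u else 0) * \<xi> s w)"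
          by (simp add: mul_alt[OF w] autD_sum[OF a] sum_distrib_left sum_distrib_right)
        also have "\<dots> = (\<Sum>t\<in>UNIV. \<Sum>u\<in>UNIV. if m s w = v \<and> m t u = w then G s t u else 0)"
          using True by (intro sum.cong refl) (auto simp: G_def autD_zero[OF a])
        finally show ?thesis using True by simp
      qed simp
      thus ?thesis using v by (simp add: mul_alt)
    qed
    finally show ?thesis .
  qed
qed

end

definition inn :: "('a, 'b) ring_scheme \<Rightarrow> 'a \<Rightarrow> 'a \<Rightarrow> 'a" where
  "inn R r = restrict (\<lambda>x. r \<otimes>\<^bsub>R\<^esub> x \<otimes>\<^bsub>R\<^esub> inv\<^bsub>R\<^esub> r) (carrier R)"

lemma InnR_eq: "InnR R = inn R ` Units R"
  unfolding InnR_def inn_def by auto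

context ring begin

lemma inv_cancel_l[simp]: "r \<in> Units R \<Longrightarrow> x \<in> carrier R \<Longrightarrow> inv r \<otimes> (r \<otimes> x) = x"
  by (simp add: m_assoc[symmetric] Units_closed)
lemma inv_cancel_r[simp]: "r \<in> Units R \<Longrightarrow> x \<in> carrier R \<Longrightarrow> r \<otimes> (inv r \<otimes> x) = x"
  by (simp add: m_assoc[symmetric] Units_closed)

lemma inn_apply: "x \<in> carrier R \<Longrightarrow> inn R r x = r \<otimes> x \<otimes> inv r"
  by (simp add: inn_def)

lemma inn_closed: "r \<in> Units R \<Longrightarrow> x \<in> carrier R \<Longrightarrow> inn R r x \<in> carrier R"
  by (simp add: inn_apply Units_closed)

lemma inn_inn_inv: "r \<in> Units R \<Longrightarrow> x \<in> carrier R \<Longrightarrow> inn R (inv r) (inn R r x) = x"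
proof -
  assume r: "r \<in> Units R" and x: "x \<in> carrier R"
  have rc: "r \<in> carrier R" "inv r \<in> carrier R" using r by auto
  have "inn R (inv r) (inn R r x) = inv r \<otimes> (r \<otimes> x \<otimes> inv r) \<otimes> inv (inv r)"
    using inn_closed[OF r x] by (simp add: inn_apply x)
  also have "\<dots> = (inv r \<otimes> r) \<otimes> x \<otimes> (inv r \<otimes> r)" using r rc x by (simp add: m_assoc)
  also have "\<dots> = x" using r x by simp
  finally show ?thesis .
qed

lemma inn_Bij: "r \<in> Units R \<Longrightarrow> inn R r \<in> Bij (carrier R)"
proof -
  assume r: "r \<in> Units R"
  have ir: "inv r \<in> Units R" using r by simp
  have "bij_betw (inn R r) (carrier R) (carrier R)"
    by (rule bij_betwI[where g="inn R (inv r)"])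
       (use r ir inn_closed inn_inn_inv[OF r] inn_inn_inv[OF ir] in auto)
  thus ?thesis by (simp add: Bij_def inn_def)
qed

lemma inn_hom: "r \<in> Units R \<Longrightarrow> inn R r \<in> ring_hom R R"
proof -
  assume r: "r \<in> Units R"
  have rc: "r \<in> carrier R" "inv r \<in> carrier R" using r by auto
  show ?thesis
  proof (rule ring_hom_memI)
    fix x assume "x \<in> carrier R" thus "inn R r x \<in> carrier R" by (rule inn_closed[OF r])
  next
    fix x y assume x: "x \<in> carrier R" and y: "y \<in> carrier R"
    have "inn R r (x \<otimes> y) = r \<otimes> x \<otimes> (inv r \<otimes> r) \<otimes> y \<otimes> inv r"
      using r rc x y by (simp add: inn_apply m_assoc)
    also have "\<dots> = inn R r x \<otimes> inn R r y" using r rc x y by (simp add: inn_apply m_assoc)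
    finally show "inn R r (x \<otimes> y) = inn R r x \<otimes> inn R r y" .
    show "inn R r (x \<oplus> y) = inn R r x \<oplus> inn R r y"
      using r rc x y by (simp add: inn_apply l_distr r_distr)
  next
    show "inn R r \<one> = \<one>" using r rc by (simp add: inn_apply)
  qed
qed

lemma inn_iso: "r \<in> Units R \<Longrightarrow> inn R r \<in> ring_iso R R"
  using inn_hom inn_Bij unfolding ring_iso_def Bij_def by auto

lemma inn_comp: "q \<in> Units R \<Longrightarrow> r \<in> Units R \<Longrightarrow> compose (carrier R) (inn R q) (inn R r) = inn R (q \<otimes> r)"
proof -
  assume q: "q \<in> Units R" and r: "r \<in> Units R"
  have qc: "q \<in> carrier R" "inv q \<in> carrier R" using q by auto
  have rc: "r \<in> carrier R" "inv r \<in> carrier R" using r by auto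
  have qr: "q \<otimes> r \<in> Units R" using q r by simp
  have iqr: "inv (q \<otimes> r) = inv r \<otimes> inv q"
  proof (rule inv_unique'[symmetric])
    show "q \<otimes> r \<in> carrier R" "inv r \<otimes> inv q \<in> carrier R" using qc rc by auto
    have "q \<otimes> r \<otimes> (inv r \<otimes> inv q) = q \<otimes> (r \<otimes> inv r) \<otimes> inv q" using qc rc by (simp add: m_assoc)
    thus "q \<otimes> r \<otimes> (inv r \<otimes> inv q) = \<one>" using q r qc by simp
    have "inv r \<otimes> inv q \<otimes> (q \<otimes> r) = inv r \<otimes> (inv q \<otimes> q) \<otimes> r" using qc rc by (simp add: m_assoc)
    thus "inv r \<otimes> inv q \<otimes> (q \<otimes> r) = \<one>" using q r rc by simp
  qed
  show ?thesis
  proof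
    fix x
    show "compose (carrier R) (inn R q) (inn R r) x = inn R (q \<otimes> r) x"
    proof (cases "x \<in> carrier R")
      case True
      have "compose (carrier R) (inn R q) (inn R r) x = q \<otimes> (r \<otimes> x \<otimes> inv r) \<otimes> inv q"
        using True inn_closed[OF r True] by (simp add: compose_eq inn_apply)
      also have "\<dots> = inn R (q \<otimes> r) x" using True qc rc by (simp add: inn_apply iqr m_assoc)
      finally show ?thesis .
    qed (simp add: compose_def inn_def)
  qed
qed

lemma inn_one: "inn R \<one> = (\<lambda>x\<in>carrier R. x)"
  unfolding inn_def by (rule restrict_ext) simp

lemma hom_units: "f \<in> ring_hom R R \<Longrightarrow> r \<in> Units R \<Longrightarrow> f r \<in> Units R \<and> f (inv r) = inv (f r)"
proof -
  assume f: "f \<in> ring_hom R R" and r: "r \<in> Units R"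
  have rc: "r \<in> carrier R" "inv r \<in> carrier R" using r by auto
  have fc: "f r \<in> carrier R" "f (inv r) \<in> carrier R" using rc f by (auto simp: ring_hom_closed)
  have 1: "f r \<otimes> f (inv r) = \<one>" using f rc r by (metis ring_hom_mult ring_hom_one Units_r_inv)
  have 2: "f (inv r) \<otimes> f r = \<one>" using f rc r by (metis ring_hom_mult ring_hom_one Units_l_inv)
  have "f r \<in> Units R" using 1 2 fc unfolding Units_def by auto
  moreover have "f (inv r) = inv (f r)" by (rule inv_unique'[OF fc 1 2])
  ultimately show ?thesis by simp
qed

lemma hom_inn: "f \<in> ring_hom R R \<Longrightarrow> r \<in> Units R \<Longrightarrow>
   compose (carrier R) f (inn R r) = compose (carrier R) (inn R (f r)) f"
proof
  fix x assume f: "f \<in> ring_hom R R" and r: "r \<in> Units R"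
  have rc: "r \<in> carrier R" "inv r \<in> carrier R" using r by auto
  show "compose (carrier R) f (inn R r) x = compose (carrier R) (inn R (f r)) f x"
  proof (cases "x \<in> carrier R")
    case True
    have fx: "f x \<in> carrier R" using f True by (simp add: ring_hom_closed)
    have "compose (carrier R) f (inn R r) x = f r \<otimes> f x \<otimes> f (inv r)"
      using True rc f by (simp add: compose_eq inn_apply ring_hom_mult)
    also have "\<dots> = compose (carrier R) (inn R (f r)) f x"
      using True fx hom_units[OF f r] by (simp add: compose_eq inn_apply)
    finally show ?thesis .
  qed (simp add: compose_def)
qed

end

section \<open>Cosets in AutR\<close>

lemma AutR_mult: "f \<in> Bij (carrier R) \<Longrightarrow> g \<in> Bij (carrier R) \<Longrightarrow> f \<otimes>\<^bsub>AutR R\<^esub> g = compose (carrier R) f g"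
  by (simp add: AutR_def BijGroup_def)

context
  fixes R :: "('x \<Rightarrow> 'y) ring" (structure)
  assumes rR: "ring R"
begin

interpretation ring R by (rule rR)

lemma coset_eq: "f \<in> Bij (carrier R) \<Longrightarrow> InnR R #>\<^bsub>AutR R\<^esub> f = (\<lambda>r. compose (carrier R) (inn R r) f) ` Units R"
  unfolding r_coset_def InnR_eq using inn_Bij by (auto simp: AutR_mult)

lemma compose_inn_Bij: "f \<in> Bij (carrier R) \<Longrightarrow> r \<in> Units R \<Longrightarrow> compose (carrier R) (inn R r) f \<in> Bij (carrier R)"
  by (simp add: compose_Bij inn_Bij)

lemma comp_inn_assoc: "f \<in> Bij (carrier R) \<Longrightarrow> q \<in> Units R \<Longrightarrow> r \<in> Units R \<Longrightarrow>
  compose (carrier R) (inn R r) (compose (carrier R) (inn R q) f) = compose (carrier R) (inn R (r \<otimes> q)) f"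
  by (simp add: compose_assoc[OF Bij_imp_funcset] inn_comp)

lemma coset_C1: "f \<in> Bij (carrier R) \<Longrightarrow> q \<in> Units R \<Longrightarrow>
   InnR R #>\<^bsub>AutR R\<^esub> (compose (carrier R) (inn R q) f) = InnR R #>\<^bsub>AutR R\<^esub> f"
proof -
  assume f: "f \<in> Bij (carrier R)" and q: "q \<in> Units R"
  have fq: "compose (carrier R) (inn R q) f \<in> Bij (carrier R)" by (rule compose_inn_Bij[OF f q])
  show ?thesis
    unfolding coset_eq[OF f] coset_eq[OF fq]
  proof
    show "(\<lambda>r. compose (carrier R) (inn R r) (compose (carrier R) (inn R q) f)) ` Units R
      \<subseteq> (\<lambda>r. compose (carrier R) (inn R r) f) ` Units R"
      using comp_inn_assoc[OF f q] q by auto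
  next
    show "(\<lambda>r. compose (carrier R) (inn R r) f) ` Units R \<subseteq>
      (\<lambda>r. compose (carrier R) (inn R r) (compose (carrier R) (inn R q) f)) ` Units R"
    proof
      fix g assume "g \<in> (\<lambda>r. compose (carrier R) (inn R r) f) ` Units R"
      then obtain r where r: "r \<in> Units R" and g: "g = compose (carrier R) (inn R r) f" by auto
      have rq: "r \<otimes> inv q \<in> Units R" using r q by simp
      have "r \<otimes> inv q \<otimes> q = r" using r q by (simp add: m_assoc Units_closed)
      hence "g = compose (carrier R) (inn R (r \<otimes> inv q)) (compose (carrier R) (inn R q) f)"
        using comp_inn_assoc[OF f q rq] g by simp
      thus "g \<in> (\<lambda>r. compose (carrier R) (inn R r) (compose (carrier R) (inn R q) f)) ` Units R"
        using rq by blast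
    qed
  qed
qed

lemma coset_C2: "f \<in> Bij (carrier R) \<Longrightarrow> g \<in> Bij (carrier R) \<Longrightarrow> f \<in> ring_hom R R \<Longrightarrow>
   (InnR R #>\<^bsub>AutR R\<^esub> f) <#>\<^bsub>AutR R\<^esub> (InnR R #>\<^bsub>AutR R\<^esub> g) = InnR R #>\<^bsub>AutR R\<^esub> (compose (carrier R) f g)"
proof -
  assume f: "f \<in> Bij (carrier R)" and g: "g \<in> Bij (carrier R)" and fh: "f \<in> ring_hom R R"
  have fg: "compose (carrier R) f g \<in> Bij (carrier R)" by (rule compose_Bij[OF f g])
  have key: "compose (carrier R) (compose (carrier R) (inn R a) f) (compose (carrier R) (inn R b) g)
     = compose (carrier R) (inn R (a \<otimes> f b)) (compose (carrier R) f g)" if a: "a \<in> Units R" and b: "b \<in> Units R" for a b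
  proof -
    have fb: "f b \<in> Units R" using hom_units[OF fh b] by simp
    have ib: "inn R b \<in> Bij (carrier R)" by (rule inn_Bij[OF b])
    have "compose (carrier R) (compose (carrier R) (inn R a) f) (compose (carrier R) (inn R b) g)
       = compose (carrier R) (inn R a) (compose (carrier R) f (compose (carrier R) (inn R b) g))"
      by (rule compose_assoc[OF Bij_imp_funcset[OF compose_inn_Bij[OF g b]], symmetric])
    also have "compose (carrier R) f (compose (carrier R) (inn R b) g) = compose (carrier R) (compose (carrier R) f (inn R b)) g"
      by (simp add: compose_assoc[OF Bij_imp_funcset[OF g]])
    also have "\<dots> = compose (carrier R) (compose (carrier R) (inn R (f b)) f) g" by (simp add: hom_inn[OF fh b])
    also have "\<dots> = compose (carrier R) (inn R (f b)) (compose (carrier R) f g)"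
      by (simp add: compose_assoc[OF Bij_imp_funcset[OF g]])
    also have "compose (carrier R) (inn R a) (compose (carrier R) (inn R (f b)) (compose (carrier R) f g))
       = compose (carrier R) (inn R (a \<otimes> f b)) (compose (carrier R) f g)"
      by (rule comp_inn_assoc[OF fg fb a])
    finally show ?thesis .
  qed
  show ?thesis
    unfolding set_mult_def coset_eq[OF f] coset_eq[OF g] coset_eq[OF fg]
  proof
    show "(\<Union>h\<in>(\<lambda>r. compose (carrier R) (inn R r) f) ` Units R. \<Union>k\<in>(\<lambda>r. compose (carrier R) (inn R r) g) ` Units R. {h \<otimes>\<^bsub>AutR R\<^esub> k})
      \<subseteq> (\<lambda>r. compose (carrier R) (inn R r) (compose (carrier R) f g)) ` Units R"
    proof (clarify)
      fix a b assume a: "a \<in> Units R" and b: "b \<in> Units R"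
      have fb: "f b \<in> Units R" using hom_units[OF fh b] by simp
      show "compose (carrier R) (inn R a) f \<otimes>\<^bsub>AutR R\<^esub> compose (carrier R) (inn R b) g
         \<in> (\<lambda>r. compose (carrier R) (inn R r) (compose (carrier R) f g)) ` Units R"
      proof -
        have "compose (carrier R) (inn R a) f \<otimes>\<^bsub>AutR R\<^esub> compose (carrier R) (inn R b) g
          = compose (carrier R) (inn R (a \<otimes> f b)) (compose (carrier R) f g)"
          using AutR_mult[OF compose_inn_Bij[OF f a] compose_inn_Bij[OF g b]] key[OF a b] by simp
        moreover have "a \<otimes> f b \<in> Units R" using a fb by simp
        ultimately show ?thesis by blast
      qed
    qed
  next
    show "(\<lambda>r. compose (carrier R) (inn R r) (compose (carrier R) f g)) ` Units R \<subseteq>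
      (\<Union>h\<in>(\<lambda>r. compose (carrier R) (inn R r) f) ` Units R. \<Union>k\<in>(\<lambda>r. compose (carrier R) (inn R r) g) ` Units R. {h \<otimes>\<^bsub>AutR R\<^esub> k})"
    proof (clarify)
      fix a assume a: "a \<in> Units R"
      have "compose (carrier R) (inn R a) (compose (carrier R) f g) =
        compose (carrier R) (inn R a) f \<otimes>\<^bsub>AutR R\<^esub> compose (carrier R) (inn R \<one>) g"
        using AutR_mult[OF compose_inn_Bij[OF f a] compose_inn_Bij[OF g Units_one_closed]] key[OF a Units_one_closed] a fh
        by (simp add: ring_hom_one Units_closed)
      thus "compose (carrier R) (inn R a) (compose (carrier R) f g) \<in>
        (\<Union>h\<in>(\<lambda>r. compose (carrier R) (inn R r) f) ` Units R. \<Union>k\<in>(\<lambda>r. compose (carrier R) (inn R r) g) ` Units R. {h \<otimes>\<^bsub>AutR R\<^esub> k})"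
        using a Units_one_closed by blast
    qed
  qed
qed


lemma key_comp: "f \<in> Bij (carrier R) \<Longrightarrow> g \<in> Bij (carrier R) \<Longrightarrow> f \<in> ring_hom R R \<Longrightarrow> a \<in> Units R \<Longrightarrow> b \<in> Units R \<Longrightarrow>
  compose (carrier R) (compose (carrier R) (inn R a) f) (compose (carrier R) (inn R b) g)
     = compose (carrier R) (inn R (a \<otimes> f b)) (compose (carrier R) f g) \<and> a \<otimes> f b \<in> Units R"
proof -
  assume f: "f \<in> Bij (carrier R)" and g: "g \<in> Bij (carrier R)" and fh: "f \<in> ring_hom R R" and a: "a \<in> Units R" and b: "b \<in> Units R"
  have fg: "compose (carrier R) f g \<in> Bij (carrier R)" by (rule compose_Bij[OF f g])
  have fb: "f b \<in> Units R" using hom_units[OF fh b] by simp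
  have "compose (carrier R) (compose (carrier R) (inn R a) f) (compose (carrier R) (inn R b) g)
     = compose (carrier R) (inn R a) (compose (carrier R) f (compose (carrier R) (inn R b) g))"
    by (rule compose_assoc[OF Bij_imp_funcset[OF compose_inn_Bij[OF g b]], symmetric])
  also have "compose (carrier R) f (compose (carrier R) (inn R b) g) = compose (carrier R) (compose (carrier R) f (inn R b)) g"
    by (simp add: compose_assoc[OF Bij_imp_funcset[OF g]])
  also have "\<dots> = compose (carrier R) (compose (carrier R) (inn R (f b)) f) g" by (simp add: hom_inn[OF fh b])
  also have "\<dots> = compose (carrier R) (inn R (f b)) (compose (carrier R) f g)"
    by (simp add: compose_assoc[OF Bij_imp_funcset[OF g]])
  also have "compose (carrier R) (inn R a) (compose (carrier R) (inn R (f b)) (compose (carrier R) f g))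
     = compose (carrier R) (inn R (a \<otimes> f b)) (compose (carrier R) f g)"
    by (rule comp_inn_assoc[OF fg fb a])
  finally show ?thesis using a fb by simp
qed

lemma self_in_coset: "f \<in> Bij (carrier R) \<Longrightarrow> f \<in> InnR R #>\<^bsub>AutR R\<^esub> f"
proof -
  assume f: "f \<in> Bij (carrier R)"
  have "compose (carrier R) (inn R \<one>) f = f"
    unfolding inn_one by (rule Id_compose[OF Bij_imp_funcset[OF f] Bij_imp_extensional[OF f]])
  thus ?thesis unfolding coset_eq[OF f] using Units_one_closed by (metis image_eqI)
qed

end

definition multp :: "('d::division_ring \<Rightarrow> 'd) \<Rightarrow> bool" where
  "multp g \<longleftrightarrow> (\<forall>x y. g (x * y) = g x * g y)"

lemma autD_multp: "autD g \<Longrightarrow> multp g" by (simp add: multp_def autD_mult)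
lemma rho_multp: "a \<noteq> 0 \<Longrightarrow> multp (rho a)" by (simp add: multp_def rho_mult)

lemma autD_cancel1: "autD g \<Longrightarrow> (a::'d::division_ring) \<noteq> 0 \<Longrightarrow> g (inverse a) * (g a * x) = x"
  by (simp add: autD_inverse autD_nz)
lemma autD_cancel2: "autD g \<Longrightarrow> (a::'d::division_ring) \<noteq> 0 \<Longrightarrow> g a * (g (inverse a) * x) = x"
  by (simp add: autD_inverse autD_nz)

context SQ begin

abbreviation "RR \<equiv> Rring m th \<alpha> \<xi>"

lemma RR_carrier[simp]: "carrier RR = Rcarrier th" by (simp add: Rring_def)
lemma RR_mult[simp]: "x \<otimes>\<^bsub>RR\<^esub> y = mul x y" by (simp add: Rring_def)
lemma RR_one[simp]: "\<one>\<^bsub>RR\<^esub> = one0" by (simp add: Rring_def Rone_eq)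
lemma RR_add[simp]: "x \<oplus>\<^bsub>RR\<^esub> y = (\<lambda>s. x s + y s)" by (simp add: Rring_def)
lemma RR_zero[simp]: "\<zero>\<^bsub>RR\<^esub> = (\<lambda>_. 0)" by (simp add: Rring_def)

lemma if_add0: "(if c then a + b else (0::'d)) = (if c then a else 0) + (if c then b else 0)"
  by simp

lemma distr_l: "mul (\<lambda>s. x s + y s) z = (\<lambda>s. mul x z s + mul y z s)"
proof
  fix u show "mul (\<lambda>s. x s + y s) z u = mul x z u + mul y z u"
  proof (cases "u = th")
    case False
    have "(if m s t = u then (x s + y s) * \<alpha> s (z t) * \<xi> s t else 0)
      = (if m s t = u then x s * \<alpha> s (z t) * \<xi> s t else 0) + (if m s t = u then y s * \<alpha> s (z t) * \<xi> s t else 0)" for s t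
      by (simp add: distrib_right)
    thus ?thesis using False by (simp add: mul_alt sum.distrib)
  qed simp
qed

lemma distr_r: "mul z (\<lambda>s. x s + y s) = (\<lambda>s. mul z x s + mul z y s)"
proof
  fix u show "mul z (\<lambda>s. x s + y s) u = mul z x u + mul z y u"
  proof (cases "u = th")
    case False
    have "(if m s t = u then z s * \<alpha> s (x t + y t) * \<xi> s t else 0)
      = (if m s t = u then z s * \<alpha> s (x t) * \<xi> s t else 0) + (if m s t = u then z s * \<alpha> s (y t) * \<xi> s t else 0)" for s t
    proof (cases "m s t = u")
      case True
      hence "s \<noteq> th" using False by auto
      thus ?thesis using True by (simp add: autD_add[OF alpha_aut] distrib_left distrib_right)
    qed simp
    thus ?thesis using False by (simp add: mul_alt sum.distrib)
  qed simp
qed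

lemma ring_RR: "ring RR"
proof (rule ringI)
  show "abelian_group RR"
  proof (rule abelian_groupI)
    fix x assume x: "x \<in> carrier RR"
    show "\<exists>y\<in>carrier RR. y \<oplus>\<^bsub>RR\<^esub> x = \<zero>\<^bsub>RR\<^esub>"
      using x by (intro bexI[of _ "\<lambda>s. - x s"]) (auto simp: Rcarrier_def)
  qed (auto simp: Rcarrier_def add.assoc add.commute)
  show "monoid RR"
    by (rule monoidI) (auto simp: Rcarrier_def mul_assoc mul_one0_left mul_one0_right)
qed (simp_all add: distr_l distr_r)

interpretation R: ring RR by (rule ring_RR)

section \<open>diagonal elements\<close>

lemma diag_th[simp]: "diag E \<epsilon> th = 0" by (simp add: diag_def)
lemma diag_carrier[simp]: "diag E \<epsilon> \<in> Rcarrier th" by (simp add: Rcarrier_def)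

lemma diag_mul: "mul (diag E \<epsilon>) (diag E \<epsilon>') = diag E (\<lambda>s. \<epsilon> s * \<epsilon>' s)"
  by (rule ext, subst mul_diag_left) (auto simp: diag_def)

lemma diag_cong: "(\<And>e. e \<in> E \<Longrightarrow> \<epsilon> e = \<epsilon>' e) \<Longrightarrow> diag E \<epsilon> = diag E \<epsilon>'"
  by (auto simp: diag_def)

definition "NZ = {\<epsilon>::'s \<Rightarrow> 'd. \<forall>e\<in>E. \<epsilon> e \<noteq> 0}"

lemma diag_unit: "\<epsilon> \<in> NZ \<Longrightarrow> diag E \<epsilon> \<in> Units RR \<and> inv\<^bsub>RR\<^esub> (diag E \<epsilon>) = diag E (\<lambda>s. inverse (\<epsilon> s))"
proof -
  assume e: "\<epsilon> \<in> NZ"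
  have 1: "mul (diag E \<epsilon>) (diag E (\<lambda>s. inverse (\<epsilon> s))) = one0"
    unfolding diag_mul one0_def by (rule diag_cong) (use e in \<open>simp add: NZ_def\<close>)
  have 2: "mul (diag E (\<lambda>s. inverse (\<epsilon> s))) (diag E \<epsilon>) = one0"
    unfolding diag_mul one0_def by (rule diag_cong) (use e in \<open>simp add: NZ_def\<close>)
  have u: "diag E \<epsilon> \<in> Units RR" unfolding Units_def using 1 2 by auto
  have "diag E (\<lambda>s. inverse (\<epsilon> s)) = inv\<^bsub>RR\<^esub> (diag E \<epsilon>)"
    by (rule R.inv_unique') (use 1 2 in auto)
  thus ?thesis using u by simp
qed

section \<open>sigma\<close>

abbreviation "sg z \<equiv> sigma m th E (fst z) (snd z)"

lemma sigma_apply: "x \<in> Rcarrier th \<Longrightarrow> sigma m th E \<mu> \<eta> x = (\<lambda>s. if s = th then 0 else \<mu> (lft s) (x s) * \<eta> s)"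
  by (simp add: sigma_def)

lemma sigma_carrier: "x \<in> Rcarrier th \<Longrightarrow> sigma m th E \<mu> \<eta> x \<in> Rcarrier th"
  by (simp add: sigma_apply Rcarrier_def)

definition cb :: "('s \<Rightarrow> 'd) \<Rightarrow> ('s \<Rightarrow> 'd \<Rightarrow> 'd) \<times> ('s \<Rightarrow> 'd)" where
  "cb \<epsilon> = (\<lambda>e. if e \<in> E then rho (\<epsilon> e) else id, \<lambda>s. if s = th then 1 else \<epsilon> (lft s) * \<alpha> s (inverse (\<epsilon> (rgt s))))"

lemma sigma_cb: "\<epsilon> \<in> NZ \<Longrightarrow> sg (cb \<epsilon>) = inn RR (diag E \<epsilon>)"
proof
  fix x assume e: "\<epsilon> \<in> NZ"
  show "sg (cb \<epsilon>) x = inn RR (diag E \<epsilon>) x"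
  proof (cases "x \<in> Rcarrier th")
    case True
    have "inn RR (diag E \<epsilon>) x = mul (mul (diag E \<epsilon>) x) (diag E (\<lambda>s. inverse (\<epsilon> s)))"
      using True diag_unit[OF e] by (simp add: inn_def)
    also have "\<dots> = sg (cb \<epsilon>) x"
    proof
      fix u show "mul (mul (diag E \<epsilon>) x) (diag E (\<lambda>s. inverse (\<epsilon> s))) u = sg (cb \<epsilon>) x u"
      proof (cases "u = th")
        case False
        have nz: "\<epsilon> (lft u) \<noteq> 0" using e lftE[OF False] by (simp add: NZ_def)
        show ?thesis using False True lftE[OF False] nz
          by (simp add: mul_diag_left mul_diag_right sigma_apply cb_def rho_def mult.assoc)
      qed (simp add: True sigma_apply)
    qed
    finally show ?thesis by simp
  next
    case False thus ?thesis by (simp add: sigma_def inn_def)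
  qed
qed

end

context SQ begin

abbreviation "Zm \<equiv> monoid.mult (Z1grp m th E \<alpha> \<xi>)"

lemma Zm_eq: "Zm a b = (\<lambda>e. fst a e \<circ> fst b e, \<lambda>s. if s = th then 1 else fst a (lft s) (snd b s) * snd a s)"
  by (simp add: Z1grp_def case_prod_beta)

lemma cb_fst_E: "e \<in> E \<Longrightarrow> fst (cb \<epsilon>) e = rho (\<epsilon> e)" by (simp add: cb_def)
lemma cb_snd: "s \<noteq> th \<Longrightarrow> snd (cb \<epsilon>) s = \<epsilon> (lft s) * \<alpha> s (inverse (\<epsilon> (rgt s)))" by (simp add: cb_def)

lemma cb_Z1: "\<epsilon> \<in> NZ \<Longrightarrow> cb \<epsilon> \<in> Z1set m th E \<alpha> \<xi>"
proof -
  assume e: "\<epsilon> \<in> NZ"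
  have nz: "x \<in> E \<Longrightarrow> \<epsilon> x \<noteq> 0" for x using e by (simp add: NZ_def)
  define \<mu> where "\<mu> = fst (cb \<epsilon>)"
  define \<eta> where "\<eta> = snd (cb \<epsilon>)"
  have c1: "\<forall>e\<in>E. autD (\<mu> e)" by (simp add: \<mu>_def cb_def autD_rho nz)
  have c2: "\<forall>e. e \<notin> E \<longrightarrow> \<mu> e = id" by (simp add: \<mu>_def cb_def)
  have c3: "\<forall>s. s \<noteq> th \<longrightarrow> \<eta> s \<noteq> 0"
    by (auto simp: \<eta>_def cb_def nz lftE rgtE autD_nz[OF alpha_aut])
  have c4: "\<eta> th = 1" by (simp add: \<eta>_def cb_def)
  have c5: "\<forall>s. s \<noteq> th \<longrightarrow> \<mu> (lft s) \<circ> \<alpha> s \<circ> inv_into UNIV (\<mu> (rgt s)) = rho (\<eta> s) \<circ> \<alpha> s"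
  proof (intro allI impI ext)
    fix s d assume s: "s \<noteq> th"
    let ?a = "\<epsilon> (lft s)" and ?b = "\<epsilon> (rgt s)"
    have a: "?a \<noteq> 0" and b: "?b \<noteq> 0" using nz lftE[OF s] rgtE[OF s] by auto
    have A: "autD (\<alpha> s)" by (rule alpha_aut[OF s])
    have ab: "\<alpha> s (inverse ?b) \<noteq> 0" using autD_nz[OF A] b by simp
    have iv: "inv_into UNIV (\<mu> (rgt s)) = rho (inverse ?b)"
      using rgtE[OF s] b by (simp add: \<mu>_def cb_fst_E inv_rho)
    have "(\<mu> (lft s) \<circ> \<alpha> s \<circ> inv_into UNIV (\<mu> (rgt s))) d = ?a * (\<alpha> s (inverse ?b) * \<alpha> s d * \<alpha> s ?b) * inverse ?a"
      unfolding iv using lftE[OF s] rgtE[OF s] b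
      by (simp add: \<mu>_def cb_fst_E rho_def autD_mult[OF A])
    also have "\<dots> = (rho (\<eta> s) \<circ> \<alpha> s) d"
      using s a ab by (simp add: \<eta>_def cb_snd rho_def nonzero_inverse_mult_distrib autD_inverse[OF A] mult.assoc)
    finally show "(\<mu> (lft s) \<circ> \<alpha> s \<circ> inv_into UNIV (\<mu> (rgt s))) d = (rho (\<eta> s) \<circ> \<alpha> s) d" .
  qed
  have c6: "\<forall>s t. m s t \<noteq> th \<longrightarrow> \<mu> (lft s) (\<xi> s t) = \<eta> s * \<alpha> s (\<eta> t) * \<xi> s t * inverse (\<eta> (m s t))"
  proof (intro allI impI)
    fix s t assume st: "m s t \<noteq> th"
    have s: "s \<noteq> th" and t: "t \<noteq> th" using st by (metis zl, metis zr)
    let ?a = "\<epsilon> (lft s)" and ?b = "\<epsilon> (rgt s)" and ?c = "\<epsilon> (rgt t)" and ?x = "\<xi> s t"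
    have a: "?a \<noteq> 0" and b: "?b \<noteq> 0" and c: "?c \<noteq> 0" using nz lftE[OF s] rgtE[OF s] rgtE[OF t] by auto
    have x: "?x \<noteq> 0" by (rule xi_nz[OF st])
    have A: "autD (\<alpha> s)" by (rule alpha_aut[OF s])
    have Ast: "autD (\<alpha> (m s t))" by (rule alpha_aut[OF st])
    have mid: "lft t = rgt s" using prod_mid[OF st] by simp
    have y: "\<alpha> (m s t) (inverse ?c) \<noteq> 0" using autD_nz[OF Ast] c by simp
    have "\<eta> s * \<alpha> s (\<eta> t) = ?a * \<alpha> s (inverse ?b) * (\<alpha> s ?b * \<alpha> s (\<alpha> t (inverse ?c)))"
      using s t mid by (simp add: \<eta>_def cb_snd autD_mult[OF A] mult.assoc)
    also have "\<dots> = ?a * \<alpha> s (\<alpha> t (inverse ?c))"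
      using b by (simp add: mult.assoc autD_cancel1[OF A])
    also have "\<dots> = ?a * (?x * \<alpha> (m s t) (inverse ?c) * inverse ?x)"
      by (simp add: coc2[OF st] rho_def)
    finally have 1: "\<eta> s * \<alpha> s (\<eta> t) = ?a * (?x * \<alpha> (m s t) (inverse ?c) * inverse ?x)" .
    have 2: "\<eta> (m s t) = ?a * \<alpha> (m s t) (inverse ?c)"
      using st by (simp add: \<eta>_def cb_snd prod_lft prod_rgt)
    have "\<eta> s * \<alpha> s (\<eta> t) * \<xi> s t * inverse (\<eta> (m s t))
        = ?a * (?x * \<alpha> (m s t) (inverse ?c) * inverse ?x) * ?x * (inverse (\<alpha> (m s t) (inverse ?c)) * inverse ?a)"
      using a y by (simp add: 1 2 nonzero_inverse_mult_distrib)
    also have "\<dots> = ?a * ?x * inverse ?a" using x y by (simp add: mult.assoc)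
    also have "\<dots> = \<mu> (lft s) (\<xi> s t)" using lftE[OF s] by (simp add: \<mu>_def cb_fst_E rho_def)
    finally show "\<mu> (lft s) (\<xi> s t) = \<eta> s * \<alpha> s (\<eta> t) * \<xi> s t * inverse (\<eta> (m s t))" by simp
  qed
  have "(\<mu>, \<eta>) \<in> Z1set m th E \<alpha> \<xi>"
    unfolding Z1set_def using c1 c2 c3 c4 c5 c6 by simp
  thus ?thesis by (simp add: \<mu>_def \<eta>_def)
qed


definition "normalz z \<longleftrightarrow> (\<forall>e. e \<notin> E \<longrightarrow> fst z e = id) \<and> snd z th = 1"

lemma Z1_normal: "z \<in> Z1set m th E \<alpha> \<xi> \<Longrightarrow> normalz z"
  by (auto simp: Z1set_def normalz_def)

lemma B1_eq: "B1set m th E \<alpha> \<xi> = cb ` NZ"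
proof
  show "B1set m th E \<alpha> \<xi> \<subseteq> cb ` NZ"
  proof
    fix z assume z: "z \<in> B1set m th E \<alpha> \<xi>"
    obtain \<mu> \<eta> where z': "z = (\<mu>, \<eta>)" by (cases z)
    have zz: "(\<mu>, \<eta>) \<in> Z1set m th E \<alpha> \<xi>" using z z' by (simp add: B1set_def)
    obtain \<epsilon> where e: "\<forall>e\<in>E. \<epsilon> e \<noteq> 0 \<and> \<mu> e = rho (\<epsilon> e)"
      and h: "\<forall>s. s \<noteq> th \<longrightarrow> \<eta> s = \<epsilon> (lft s) * \<alpha> s (inverse (\<epsilon> (rgt s)))"
      using z z' by (auto simp: B1set_def)
    have "\<mu> = fst (cb \<epsilon>)" using e zz by (auto simp: cb_def Z1set_def)
    moreover have "\<eta> = snd (cb \<epsilon>)" using h zz by (auto simp: cb_def Z1set_def)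
    moreover have "\<epsilon> \<in> NZ" using e by (simp add: NZ_def)
    ultimately show "z \<in> cb ` NZ" using z' by (metis prod.collapse image_eqI)
  qed
next
  show "cb ` NZ \<subseteq> B1set m th E \<alpha> \<xi>"
  proof
    fix z assume "z \<in> cb ` NZ"
    then obtain \<epsilon> where e: "\<epsilon> \<in> NZ" and z: "z = cb \<epsilon>" by auto
    have "cb \<epsilon> \<in> Z1set m th E \<alpha> \<xi>" by (rule cb_Z1[OF e])
    moreover have "\<forall>e\<in>E. \<epsilon> e \<noteq> 0 \<and> fst (cb \<epsilon>) e = rho (\<epsilon> e)" using e by (simp add: NZ_def cb_def)
    moreover have "\<forall>s. s \<noteq> th \<longrightarrow> snd (cb \<epsilon>) s = \<epsilon> (lft s) * \<alpha> s (inverse (\<epsilon> (rgt s)))" by (simp add: cb_def)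
    ultimately show "z \<in> B1set m th E \<alpha> \<xi>" unfolding B1set_def z
      by (cases "cb \<epsilon>") auto
  qed
qed

lemma NZ_mult: "\<epsilon> \<in> NZ \<Longrightarrow> \<epsilon>' \<in> NZ \<Longrightarrow> (\<lambda>e. \<epsilon> e * \<epsilon>' e) \<in> NZ" by (simp add: NZ_def)
lemma NZ_inv: "\<epsilon> \<in> NZ \<Longrightarrow> (\<lambda>e. inverse (\<epsilon> e)) \<in> NZ" by (simp add: NZ_def)
lemma NZ_one: "(\<lambda>e. 1) \<in> NZ" by (simp add: NZ_def)

lemma cb_cong: "(\<And>e. e \<in> E \<Longrightarrow> \<epsilon> e = \<epsilon>' e) \<Longrightarrow> cb \<epsilon> = cb \<epsilon>'"
  by (auto simp: cb_def fun_eq_iff lftE rgtE)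

lemma cb_mult: "\<epsilon> \<in> NZ \<Longrightarrow> \<epsilon>' \<in> NZ \<Longrightarrow> Zm (cb \<epsilon>) (cb \<epsilon>') = cb (\<lambda>e. \<epsilon> e * \<epsilon>' e)"
proof -
  assume e: "\<epsilon> \<in> NZ" and e': "\<epsilon>' \<in> NZ"
  have nz: "x \<in> E \<Longrightarrow> \<epsilon> x \<noteq> 0" "x \<in> E \<Longrightarrow> \<epsilon>' x \<noteq> 0" for x using e e' by (auto simp: NZ_def)
  have f: "(\<lambda>x. fst (cb \<epsilon>) x \<circ> fst (cb \<epsilon>') x) = fst (cb (\<lambda>e. \<epsilon> e * \<epsilon>' e))"
    by (auto simp: cb_def fun_eq_iff rho_comp nz)
  have s: "(\<lambda>s. if s = th then 1 else fst (cb \<epsilon>) (lft s) (snd (cb \<epsilon>') s) * snd (cb \<epsilon>) s) = snd (cb (\<lambda>e. \<epsilon> e * \<epsilon>' e))"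
  proof
    fix s show "(if s = th then 1 else fst (cb \<epsilon>) (lft s) (snd (cb \<epsilon>') s) * snd (cb \<epsilon>) s) = snd (cb (\<lambda>e. \<epsilon> e * \<epsilon>' e)) s"
    proof (cases "s = th")
      case False
      have A: "autD (\<alpha> s)" by (rule alpha_aut[OF False])
      have l: "lft s \<in> E" and r: "rgt s \<in> E" using lftE[OF False] rgtE[OF False] by auto
      show ?thesis using False nz[OF l] nz[OF r]
        by (simp add: cb_fst_E[OF l] cb_snd rho_def nonzero_inverse_mult_distrib autD_mult[OF A] mult.assoc)
    qed (simp add: cb_def)
  qed
  show ?thesis unfolding Zm_eq f s by simp
qed

lemma cb_one_mult: "normalz z \<Longrightarrow> Zm (cb (\<lambda>_. 1)) z = z"
proof -
  assume n: "normalz z"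
  have f: "(\<lambda>e. fst (cb (\<lambda>_. 1)) e \<circ> fst z e) = fst z" by (auto simp: cb_def rho_one)
  have s: "(\<lambda>s. if s = th then 1 else fst (cb (\<lambda>_. 1)) (lft s) (snd z s) * snd (cb (\<lambda>_. 1)) s) = snd z"
  proof
    fix s show "(if s = th then 1 else fst (cb (\<lambda>_. 1)) (lft s) (snd z s) * snd (cb (\<lambda>_. 1)) s) = snd z s"
      using n lftE by (auto simp: cb_def rho_one normalz_def autD_one[OF alpha_aut])
  qed
  show ?thesis unfolding Zm_eq f s by simp
qed

lemma Zm_assoc: "(\<And>e. e \<in> E \<Longrightarrow> multp (fst a e)) \<Longrightarrow> Zm (Zm a b) c = Zm a (Zm b c)"
proof -
  assume mp: "\<And>e. e \<in> E \<Longrightarrow> multp (fst a e)"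
  have h: "\<And>s. s \<noteq> th \<Longrightarrow> fst a (lft s) (fst b (lft s) (snd c s) * snd b s) = fst a (lft s) (fst b (lft s) (snd c s)) * fst a (lft s) (snd b s)"
    using mp[OF lftE] by (simp add: multp_def)
  show ?thesis by (simp add: Zm_eq h comp_assoc fun_eq_iff mult.assoc)
qed

lemma cb_multp: "\<epsilon> \<in> NZ \<Longrightarrow> e \<in> E \<Longrightarrow> multp (fst (cb \<epsilon>) e)"
  by (simp add: cb_fst_E rho_multp NZ_def)

lemma coset_form: "B1set m th E \<alpha> \<xi> #>\<^bsub>Z1grp m th E \<alpha> \<xi>\<^esub> a = (\<lambda>\<epsilon>. Zm (cb \<epsilon>) a) ` NZ"
  unfolding r_coset_def B1_eq by auto

lemma coset_cb: "\<epsilon> \<in> NZ \<Longrightarrow> B1set m th E \<alpha> \<xi> #>\<^bsub>Z1grp m th E \<alpha> \<xi>\<^esub> (Zm (cb \<epsilon>) a) = B1set m th E \<alpha> \<xi> #>\<^bsub>Z1grp m th E \<alpha> \<xi>\<^esub> a"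
proof -
  assume e: "\<epsilon> \<in> NZ"
  have eq: "Zm (cb \<epsilon>') (Zm (cb \<epsilon>) a) = Zm (cb (\<lambda>x. \<epsilon>' x * \<epsilon> x)) a" if e': "\<epsilon>' \<in> NZ" for \<epsilon>'
    using Zm_assoc[of "cb \<epsilon>'" "cb \<epsilon>" a] cb_multp[OF e'] cb_mult[OF e' e] by simp
  show ?thesis unfolding coset_form
  proof
    show "(\<lambda>\<epsilon>'. Zm (cb \<epsilon>') (Zm (cb \<epsilon>) a)) ` NZ \<subseteq> (\<lambda>\<epsilon>. Zm (cb \<epsilon>) a) ` NZ"
      using eq NZ_mult[OF _ e] by auto
  next
    show "(\<lambda>\<epsilon>. Zm (cb \<epsilon>) a) ` NZ \<subseteq> (\<lambda>\<epsilon>'. Zm (cb \<epsilon>') (Zm (cb \<epsilon>) a)) ` NZ"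
    proof
      fix z assume "z \<in> (\<lambda>\<epsilon>. Zm (cb \<epsilon>) a) ` NZ"
      then obtain \<epsilon>'' where e'': "\<epsilon>'' \<in> NZ" and z: "z = Zm (cb \<epsilon>'') a" by auto
      let ?f = "\<lambda>x. \<epsilon>'' x * inverse (\<epsilon> x)"
      have f: "?f \<in> NZ" using NZ_mult[OF e'' NZ_inv[OF e]] .
      have "cb (\<lambda>x. ?f x * \<epsilon> x) = cb \<epsilon>''"
        by (rule cb_cong) (use e in \<open>simp add: NZ_def mult.assoc\<close>)
      hence "z = Zm (cb ?f) (Zm (cb \<epsilon>) a)" using eq[OF f] z by simp
      thus "z \<in> (\<lambda>\<epsilon>'. Zm (cb \<epsilon>') (Zm (cb \<epsilon>) a)) ` NZ" using f by blast
    qed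
  qed
qed

lemma in_own_coset: "normalz a \<Longrightarrow> a \<in> B1set m th E \<alpha> \<xi> #>\<^bsub>Z1grp m th E \<alpha> \<xi>\<^esub> a"
  unfolding coset_form using cb_one_mult[of a] NZ_one by (metis image_eqI)

lemma sigma_Zm: "(\<And>e. e \<in> E \<Longrightarrow> multp (fst a e)) \<Longrightarrow> sg (Zm a b) = compose (Rcarrier th) (sg a) (sg b)"
proof
  fix x assume mp: "\<And>e. e \<in> E \<Longrightarrow> multp (fst a e)"
  show "sg (Zm a b) x = compose (Rcarrier th) (sg a) (sg b) x"
  proof (cases "x \<in> Rcarrier th")
    case True
    show ?thesis
      using True sigma_carrier[OF True] mp[OF lftE]
      by (auto simp: compose_eq sigma_apply Zm_eq multp_def mult.assoc)
  qed (simp add: sigma_def compose_def)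
qed

end

context SQ begin

interpretation R: ring RR by (rule ring_RR)

lemma Z1_aut: "z \<in> Z1set m th E \<alpha> \<xi> \<Longrightarrow> e \<in> E \<Longrightarrow> autD (fst z e)"
  by (auto simp: Z1set_def)
lemma Z1_eta_nz: "z \<in> Z1set m th E \<alpha> \<xi> \<Longrightarrow> s \<noteq> th \<Longrightarrow> snd z s \<noteq> 0"
  by (auto simp: Z1set_def)
lemma Z1_cond5: "z \<in> Z1set m th E \<alpha> \<xi> \<Longrightarrow> s \<noteq> th \<Longrightarrow>
   fst z (lft s) (\<alpha> s d) = snd z s * \<alpha> s (fst z (rgt s) d) * inverse (snd z s)"
proof -
  assume z: "z \<in> Z1set m th E \<alpha> \<xi>" and s: "s \<noteq> th"
  have "fst z (lft s) \<circ> \<alpha> s \<circ> inv_into UNIV (fst z (rgt s)) = rho (snd z s) \<circ> \<alpha> s"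
    using z s by (auto simp: Z1set_def)
  hence "(fst z (lft s) \<circ> \<alpha> s \<circ> inv_into UNIV (fst z (rgt s))) (fst z (rgt s) d) = (rho (snd z s) \<circ> \<alpha> s) (fst z (rgt s) d)"
    by simp
  thus ?thesis using autD_inv_into[OF Z1_aut[OF z rgtE[OF s]]] by (simp add: rho_def)
qed
lemma Z1_cond6: "z \<in> Z1set m th E \<alpha> \<xi> \<Longrightarrow> m s t \<noteq> th \<Longrightarrow>
   fst z (lft s) (\<xi> s t) = snd z s * \<alpha> s (snd z t) * \<xi> s t * inverse (snd z (m s t))"
  by (auto simp: Z1set_def)

lemma Z1_eta_E: "z \<in> Z1set m th E \<alpha> \<xi> \<Longrightarrow> e \<in> E \<Longrightarrow> snd z e = 1"
proof -
  assume z: "z \<in> Z1set m th E \<alpha> \<xi>" and e: "e \<in> E"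
  have ee: "m e e \<noteq> th" using e idem E_nz by simp
  have "fst z e 1 = snd z e * snd z e * 1 * inverse (snd z e)"
    using Z1_cond6[OF z ee] e idem xi_EE by simp
  moreover have "fst z e 1 = 1" using autD_one[OF Z1_aut[OF z e]] .
  moreover have "snd z e \<noteq> 0" using Z1_eta_nz[OF z E_nz[OF e]] .
  ultimately show ?thesis by (simp add: mult.assoc)
qed

lemma autD_if0: "autD g \<Longrightarrow> g (if c then a else 0) = (if c then g a else 0)"
  by (simp add: autD_zero)

lemma sigma_mul: "z \<in> Z1set m th E \<alpha> \<xi> \<Longrightarrow> x \<in> Rcarrier th \<Longrightarrow> y \<in> Rcarrier th \<Longrightarrow>
   sg z (mul x y) = mul (sg z x) (sg z y)"
proof
  fix u assume z: "z \<in> Z1set m th E \<alpha> \<xi>" and x: "x \<in> Rcarrier th" and y: "y \<in> Rcarrier th"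
  have xy: "mul x y \<in> Rcarrier th" by (simp add: Rcarrier_def)
  show "sg z (mul x y) u = mul (sg z x) (sg z y) u"
  proof (cases "u = th")
    case True thus ?thesis using xy by (simp add: sigma_apply)
  next
    case u: False
    let ?\<mu> = "fst z" and ?\<eta> = "snd z"
    have A: "autD (?\<mu> (lft u))" by (rule Z1_aut[OF z lftE[OF u]])
    have trm: "?\<mu> (lft u) (if m s t = u then x s * \<alpha> s (y t) * \<xi> s t else 0) * ?\<eta> u
      = (if m s t = u then sg z x s * \<alpha> s (sg z y t) * \<xi> s t else 0)" for s t
    proof (cases "m s t = u")
      case True
      hence st: "m s t \<noteq> th" using u by simp
      have s: "s \<noteq> th" and t: "t \<noteq> th" using st by (metis zl, metis zr)
      have ls: "lft s = lft u" using prod_lft[OF st] True by simp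
      have mid: "lft t = rgt s" using prod_mid[OF st] by simp
      have As: "autD (\<alpha> s)" by (rule alpha_aut[OF s])
      have es: "?\<eta> s \<noteq> 0" and eu: "?\<eta> u \<noteq> 0" using Z1_eta_nz[OF z] s u by auto
      have "?\<mu> (lft u) (x s * \<alpha> s (y t) * \<xi> s t) * ?\<eta> u
          = ?\<mu> (lft s) (x s) * (?\<eta> s * \<alpha> s (?\<mu> (rgt s) (y t)) * inverse (?\<eta> s)) *
            (?\<eta> s * \<alpha> s (?\<eta> t) * \<xi> s t * inverse (?\<eta> u)) * ?\<eta> u"
      proof -
        have 1: "?\<mu> (lft u) (\<alpha> s (y t)) = ?\<eta> s * \<alpha> s (?\<mu> (rgt s) (y t)) * inverse (?\<eta> s)"
          using Z1_cond5[OF z s] ls by simp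
        have 2: "?\<mu> (lft u) (\<xi> s t) = ?\<eta> s * \<alpha> s (?\<eta> t) * \<xi> s t * inverse (?\<eta> u)"
          using Z1_cond6[OF z st] ls True by simp
        show ?thesis using ls by (simp add: autD_mult[OF A] 1 2)
      qed
      also have "\<dots> = ?\<mu> (lft s) (x s) * ?\<eta> s * \<alpha> s (?\<mu> (rgt s) (y t)) * \<alpha> s (?\<eta> t) * \<xi> s t"
        using es eu by (simp add: mult.assoc)
      also have "\<dots> = sg z x s * \<alpha> s (sg z y t) * \<xi> s t"
        using s t x y by (simp add: sigma_apply autD_mult[OF As] mid mult.assoc)
      finally show ?thesis using True by simp
    qed (simp add: autD_zero[OF A])
    have "sg z (mul x y) u = ?\<mu> (lft u) (mul x y u) * ?\<eta> u" using u xy by (simp add: sigma_apply)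
    also have "\<dots> = (\<Sum>s\<in>UNIV. \<Sum>t\<in>UNIV. ?\<mu> (lft u) (if m s t = u then x s * \<alpha> s (y t) * \<xi> s t else 0) * ?\<eta> u)"
      using u by (simp add: mul_alt autD_sum[OF A] sum_distrib_right)
    also have "\<dots> = mul (sg z x) (sg z y) u" using u by (simp add: mul_alt trm)
    finally show ?thesis .
  qed
qed

lemma sigma_hom: "z \<in> Z1set m th E \<alpha> \<xi> \<Longrightarrow> sg z \<in> ring_hom RR RR"
proof (rule ring_hom_memI)
  assume z: "z \<in> Z1set m th E \<alpha> \<xi>"
  fix x y :: "'s \<Rightarrow> 'd" assume x: "x \<in> carrier RR" and y: "y \<in> carrier RR"
  show "sg z (x \<otimes>\<^bsub>RR\<^esub> y) = sg z x \<otimes>\<^bsub>RR\<^esub> sg z y" using sigma_mul[OF z] x y by simp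
  have xy: "(\<lambda>s. x s + y s) \<in> Rcarrier th" using x y by (simp add: Rcarrier_def)
  show "sg z (x \<oplus>\<^bsub>RR\<^esub> y) = sg z x \<oplus>\<^bsub>RR\<^esub> sg z y"
    using x y xy by (auto simp: sigma_apply fun_eq_iff autD_add[OF Z1_aut[OF z lftE]] distrib_right)
next
  assume z: "z \<in> Z1set m th E \<alpha> \<xi>"
  fix x :: "'s \<Rightarrow> 'd" assume "x \<in> carrier RR" thus "sg z x \<in> carrier RR" by (simp add: sigma_carrier)
next
  assume z: "z \<in> Z1set m th E \<alpha> \<xi>"
  have "one0 \<in> Rcarrier th" by (simp add: Rcarrier_def)
  moreover have "(\<lambda>s. if s = th then 0 else fst z (lft s) (one0 s) * snd z s) = one0"
  proof
    fix s show "(if s = th then 0 else fst z (lft s) (one0 s) * snd z s) = one0 s"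
      by (cases "s \<in> E") (auto simp: one0_def diag_def autD_one[OF Z1_aut[OF z]] Z1_eta_E[OF z]
            autD_zero[OF Z1_aut[OF z lftE]])
  qed
  ultimately show "sg z \<one>\<^bsub>RR\<^esub> = \<one>\<^bsub>RR\<^esub>" by (simp add: sigma_apply)
qed

lemma sigma_Bij: "z \<in> Z1set m th E \<alpha> \<xi> \<Longrightarrow> sg z \<in> Bij (Rcarrier th)"
proof -
  assume z: "z \<in> Z1set m th E \<alpha> \<xi>"
  let ?g = "\<lambda>y. (\<lambda>s. if s = th then 0 else inv_into UNIV (fst z (lft s)) (y s * inverse (snd z s)))"
  have "bij_betw (sg z) (Rcarrier th) (Rcarrier th)"
  proof (rule bij_betwI[where g="?g"])
    show "sg z \<in> Rcarrier th \<rightarrow> Rcarrier th" using sigma_carrier by auto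
    show "?g \<in> Rcarrier th \<rightarrow> Rcarrier th" by (auto simp: Rcarrier_def)
    fix x :: "'s \<Rightarrow> 'd" assume x: "x \<in> Rcarrier th"
    show "?g (sg z x) = x"
      using x Z1_eta_nz[OF z] autD_inv_into[OF Z1_aut[OF z lftE]]
      by (auto simp: sigma_apply fun_eq_iff Rcarrier_def mult.assoc)
  next
    fix y :: "'s \<Rightarrow> 'd" assume y: "y \<in> Rcarrier th"
    have gy: "?g y \<in> Rcarrier th" by (simp add: Rcarrier_def)
    show "sg z (?g y) = y"
      using y gy Z1_eta_nz[OF z] autD_f_inv_into[OF Z1_aut[OF z lftE]]
      by (auto simp: sigma_apply fun_eq_iff Rcarrier_def mult.assoc)
  qed
  thus ?thesis by (simp add: Bij_def sigma_def)
qed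

lemma sigma_iso: "z \<in> Z1set m th E \<alpha> \<xi> \<Longrightarrow> sg z \<in> ring_iso RR RR"
  using sigma_hom sigma_Bij unfolding ring_iso_def Bij_def by auto

lemma sigma_inj: "z \<in> Z1set m th E \<alpha> \<xi> \<Longrightarrow> normalz z' \<Longrightarrow> (\<And>e. e \<in> E \<Longrightarrow> fst z' e 1 = 1) \<Longrightarrow>
   sg z = sg z' \<Longrightarrow> z = z'"
proof -
  assume z: "z \<in> Z1set m th E \<alpha> \<xi>" and n': "normalz z'" and o': "\<And>e. e \<in> E \<Longrightarrow> fst z' e 1 = 1"
    and eq: "sg z = sg z'"
  have n: "normalz z" by (rule Z1_normal[OF z])
  have pt: "fst z (lft s) d * snd z s = fst z' (lft s) d * snd z' s" if s: "s \<noteq> th" for s d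
  proof -
    let ?x = "\<lambda>u. if u = s then d else 0"
    have x: "?x \<in> Rcarrier th" using s by (simp add: Rcarrier_def)
    have "sg z ?x s = sg z' ?x s" using eq by simp
    thus ?thesis using x s by (simp add: sigma_apply)
  qed
  have eta: "snd z s = snd z' s" for s
  proof (cases "s = th")
    case True thus ?thesis using n n' by (simp add: normalz_def)
  next
    case False thus ?thesis using pt[OF False, of 1] autD_one[OF Z1_aut[OF z lftE[OF False]]] o'[OF lftE[OF False]] by simp
  qed
  have mu: "fst z e = fst z' e" for e
  proof (cases "e \<in> E")
    case True
    show ?thesis
    proof
      fix d show "fst z e d = fst z' e d"
        using pt[OF E_nz[OF True], of d] eta[of e] Z1_eta_nz[OF z E_nz[OF True]] True by simp
    qed
  next
    case False thus ?thesis using n n' by (simp add: normalz_def)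
  qed
  show ?thesis using mu eta by (simp add: prod_eq_iff fun_eq_iff)
qed

definition "delta e = diag E (\<lambda>s. if s = e then (1::'d) else 0)"

lemma delta_carrier: "delta e \<in> Rcarrier th" by (simp add: delta_def)

lemma sigma_delta: "z \<in> Z1set m th E \<alpha> \<xi> \<Longrightarrow> e \<in> E \<Longrightarrow> sg z (delta e) = delta e"
proof
  fix u assume z: "z \<in> Z1set m th E \<alpha> \<xi>" and e: "e \<in> E"
  show "sg z (delta e) u = delta e u"
  proof (cases "u = th")
    case False
    have "sg z (delta e) u = fst z (lft u) (delta e u) * snd z u" using False by (simp add: sigma_apply[OF delta_carrier])
    thus ?thesis using False e autD_one[OF Z1_aut[OF z e]] Z1_eta_E[OF z e] autD_zero[OF Z1_aut[OF z lftE[OF False]]]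
      by (auto simp: delta_def diag_def)
  qed (simp add: sigma_apply delta_carrier delta_def)
qed

lemma r_diag: "r \<in> Units RR \<Longrightarrow> (\<And>e. e \<in> E \<Longrightarrow> mul r (delta e) = mul (delta e) r) \<Longrightarrow> \<exists>\<epsilon>\<in>NZ. r = diag E \<epsilon>"
proof -
  assume r: "r \<in> Units RR" and c: "\<And>e. e \<in> E \<Longrightarrow> mul r (delta e) = mul (delta e) r"
  have rc: "r \<in> Rcarrier th" using r by (auto simp: Units_def)
  have zero: "r u = 0" if u: "u \<noteq> th" "u \<notin> E" for u
  proof -
    have ne: "lft u \<noteq> rgt u" using diag_elem u by blast
    have "mul r (delta (rgt u)) u = mul (delta (rgt u)) r u" using c[OF rgtE[OF u(1)]] by simp
    thus ?thesis using u ne autD_one[OF alpha_aut[OF u(1)]]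
      by (simp add: delta_def mul_diag_left mul_diag_right)
  qed
  have rd: "r = diag E r"
  proof
    fix u show "r u = diag E r u"
      using zero rc by (cases "u = th") (auto simp: diag_def Rcarrier_def)
  qed
  have "r \<in> NZ"
  proof (unfold NZ_def, intro CollectI ballI notI)
    fix e assume e: "e \<in> E" and r0: "r e = 0"
    have "mul r (inv\<^bsub>RR\<^esub> r) = one0" using R.Units_r_inv[OF r] by simp
    hence "mul (diag E r) (inv\<^bsub>RR\<^esub> r) e = one0 e" using rd by simp
    moreover have "mul (diag E r) (inv\<^bsub>RR\<^esub> r) e = r (lft e) * (inv\<^bsub>RR\<^esub> r) e"
      using E_nz[OF e] by (simp only: mul_diag_left if_False)
    moreover have "one0 e = 1" using e by (simp add: one0_def diag_def)
    ultimately show False using e r0 by simp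
  qed
  thus ?thesis using rd by blast
qed

end

lemma multp_comp: "multp f \<Longrightarrow> multp g \<Longrightarrow> multp (f \<circ> g)" by (simp add: multp_def)

lemma in_set_mult: "h \<in> H \<Longrightarrow> k \<in> K \<Longrightarrow> h \<otimes>\<^bsub>G\<^esub> k \<in> H <#>\<^bsub>G\<^esub> K"
  unfolding set_mult_def by blast

lemma set_mult_image: "(f ` A) <#>\<^bsub>G\<^esub> (g ` B) = (\<Union>x\<in>A. \<Union>y\<in>B. {f x \<otimes>\<^bsub>G\<^esub> g y})"
  unfolding set_mult_def by auto

context SQ begin

interpretation R: ring RR by (rule ring_RR)

abbreviation "B1 \<equiv> B1set m th E \<alpha> \<xi>"
abbreviation "Z1 \<equiv> Z1set m th E \<alpha> \<xi>"
abbreviation "ZG \<equiv> Z1grp m th E \<alpha> \<xi>"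
abbreviation "Inn \<equiv> InnR RR"
abbreviation "Aut \<equiv> AutR RR"

lemma sg_Bij: "a \<in> Z1 \<Longrightarrow> sg a \<in> Bij (carrier RR)" using sigma_Bij by simp

lemma Zcb_multp: "\<epsilon> \<in> NZ \<Longrightarrow> a \<in> Z1 \<Longrightarrow> e \<in> E \<Longrightarrow> multp (fst (Zm (cb \<epsilon>) a) e)"
  by (simp add: Zm_eq multp_comp cb_multp autD_multp Z1_aut)

lemma sg_Zcb: "\<epsilon> \<in> NZ \<Longrightarrow> sg (Zm (cb \<epsilon>) a) = compose (carrier RR) (inn RR (diag E \<epsilon>)) (sg a)"
  using sigma_Zm[of "cb \<epsilon>" a] cb_multp sigma_cb by simp

lemma diag_U: "\<epsilon> \<in> NZ \<Longrightarrow> diag E \<epsilon> \<in> Units RR" using diag_unit by blast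

lemma Lambda_coset: "a \<in> Z1 \<Longrightarrow> Lambda m th E \<alpha> \<xi> (B1 #>\<^bsub>ZG\<^esub> a) = Inn #>\<^bsub>Aut\<^esub> sg a"
proof -
  assume a: "a \<in> Z1"
  let ?C = "B1 #>\<^bsub>ZG\<^esub> a"
  have "a \<in> ?C" by (rule in_own_coset[OF Z1_normal[OF a]])
  hence "(SOME z. z \<in> ?C) \<in> ?C" by (rule someI[of "\<lambda>z. z \<in> ?C"])
  then obtain \<epsilon> where e: "\<epsilon> \<in> NZ" and z: "(SOME z. z \<in> ?C) = Zm (cb \<epsilon>) a"
    unfolding coset_form by auto
  have "Lambda m th E \<alpha> \<xi> ?C = Inn #>\<^bsub>Aut\<^esub> sg (Zm (cb \<epsilon>) a)"
    unfolding Lambda_def Let_def z by simp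
  also have "\<dots> = Inn #>\<^bsub>Aut\<^esub> compose (carrier RR) (inn RR (diag E \<epsilon>)) (sg a)"
    by (simp only: sg_Zcb[OF e])
  also have "\<dots> = Inn #>\<^bsub>Aut\<^esub> sg a"
    by (rule coset_C1[OF ring_RR sg_Bij[OF a] diag_U[OF e]])
  finally show ?thesis .
qed

lemma sg_carrier_Aut: "a \<in> Z1 \<Longrightarrow> sg a \<in> carrier Aut"
  using sg_Bij sigma_iso by (simp add: AutR_def BijGroup_def)

lemma carrier_ZMod: "carrier (ZG Mod B1) = (\<lambda>a. B1 #>\<^bsub>ZG\<^esub> a) ` Z1"
  by (auto simp: FactGroup_def RCOSETS_def Z1grp_def)

lemma Lambda_mult: "a \<in> Z1 \<Longrightarrow> b \<in> Z1 \<Longrightarrow>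
  Lambda m th E \<alpha> \<xi> ((B1 #>\<^bsub>ZG\<^esub> a) <#>\<^bsub>ZG\<^esub> (B1 #>\<^bsub>ZG\<^esub> b)) =
  (Inn #>\<^bsub>Aut\<^esub> sg a) <#>\<^bsub>Aut\<^esub> (Inn #>\<^bsub>Aut\<^esub> sg b)"
proof -
  assume a: "a \<in> Z1" and b: "b \<in> Z1"
  let ?S = "(B1 #>\<^bsub>ZG\<^esub> a) <#>\<^bsub>ZG\<^esub> (B1 #>\<^bsub>ZG\<^esub> b)"
  have Sform: "?S = (\<Union>\<epsilon>\<in>NZ. \<Union>\<epsilon>'\<in>NZ. {Zm (Zm (cb \<epsilon>) a) (Zm (cb \<epsilon>') b)})"
    by (simp only: coset_form set_mult_image)
  have "Zm a b \<in> ?S"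
    by (rule in_set_mult[OF in_own_coset[OF Z1_normal[OF a]] in_own_coset[OF Z1_normal[OF b]]])
  hence "(SOME z. z \<in> ?S) \<in> ?S" by (rule someI[of "\<lambda>z. z \<in> ?S"])
  hence "(SOME z. z \<in> ?S) \<in> (\<Union>\<epsilon>\<in>NZ. \<Union>\<epsilon>'\<in>NZ. {Zm (Zm (cb \<epsilon>) a) (Zm (cb \<epsilon>') b)})"
    by (simp only: Sform)
  then obtain \<epsilon> \<epsilon>' where e: "\<epsilon> \<in> NZ" and e': "\<epsilon>' \<in> NZ"
    and z: "(SOME z. z \<in> ?S) = Zm (Zm (cb \<epsilon>) a) (Zm (cb \<epsilon>') b)"
    by blast
  let ?f = "sg a" and ?g = "sg b"
  have f: "?f \<in> Bij (carrier RR)" and g: "?g \<in> Bij (carrier RR)" using sg_Bij a b by auto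
  have fh: "?f \<in> ring_hom RR RR" using sigma_hom[OF a] .
  have "sg (Zm (Zm (cb \<epsilon>) a) (Zm (cb \<epsilon>') b)) = compose (carrier RR) (sg (Zm (cb \<epsilon>) a)) (sg (Zm (cb \<epsilon>') b))"
    using sigma_Zm Zcb_multp[OF e a] by simp
  also have "\<dots> = compose (carrier RR) (compose (carrier RR) (inn RR (diag E \<epsilon>)) ?f) (compose (carrier RR) (inn RR (diag E \<epsilon>')) ?g)"
    by (simp only: sg_Zcb[OF e] sg_Zcb[OF e'])
  finally have eq: "sg (Zm (Zm (cb \<epsilon>) a) (Zm (cb \<epsilon>') b)) = compose (carrier RR) (inn RR (diag E \<epsilon> \<otimes>\<^bsub>RR\<^esub> ?f (diag E \<epsilon>'))) (compose (carrier RR) ?f ?g)"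
    and U: "diag E \<epsilon> \<otimes>\<^bsub>RR\<^esub> ?f (diag E \<epsilon>') \<in> Units RR"
    using key_comp[OF ring_RR f g fh diag_U[OF e] diag_U[OF e']] by auto
  have "Lambda m th E \<alpha> \<xi> ?S = Inn #>\<^bsub>Aut\<^esub> sg (Zm (Zm (cb \<epsilon>) a) (Zm (cb \<epsilon>') b))"
    unfolding Lambda_def Let_def z by simp
  also have "\<dots> = Inn #>\<^bsub>Aut\<^esub> compose (carrier RR) ?f ?g"
    unfolding eq by (rule coset_C1[OF ring_RR compose_Bij[OF f g] U])
  also have "\<dots> = (Inn #>\<^bsub>Aut\<^esub> ?f) <#>\<^bsub>Aut\<^esub> (Inn #>\<^bsub>Aut\<^esub> ?g)"
    by (rule coset_C2[OF ring_RR f g fh, symmetric])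
  finally show ?thesis .
qed

lemma Lambda_hom: "Lambda m th E \<alpha> \<xi> \<in> hom (ZG Mod B1) (Aut Mod Inn)"
proof (rule homI)
  fix x assume "x \<in> carrier (ZG Mod B1)"
  then obtain a where a: "a \<in> Z1" and x: "x = B1 #>\<^bsub>ZG\<^esub> a" unfolding carrier_ZMod by auto
  show "Lambda m th E \<alpha> \<xi> x \<in> carrier (Aut Mod Inn)"
    using Lambda_coset[OF a] sg_carrier_Aut[OF a] x by (auto simp: FactGroup_def RCOSETS_def)
next
  fix x y assume "x \<in> carrier (ZG Mod B1)" "y \<in> carrier (ZG Mod B1)"
  then obtain a b where a: "a \<in> Z1" and x: "x = B1 #>\<^bsub>ZG\<^esub> a" and b: "b \<in> Z1" and y: "y = B1 #>\<^bsub>ZG\<^esub> b"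
    unfolding carrier_ZMod by auto
  show "Lambda m th E \<alpha> \<xi> (x \<otimes>\<^bsub>ZG Mod B1\<^esub> y) = Lambda m th E \<alpha> \<xi> x \<otimes>\<^bsub>Aut Mod Inn\<^esub> Lambda m th E \<alpha> \<xi> y"
    using Lambda_mult[OF a b] Lambda_coset[OF a] Lambda_coset[OF b] x y by (simp add: FactGroup_def)
qed

lemma Lambda_inj: "inj_on (Lambda m th E \<alpha> \<xi>) (carrier (ZG Mod B1))"
proof (rule inj_onI)
  fix x y assume "x \<in> carrier (ZG Mod B1)" "y \<in> carrier (ZG Mod B1)"
    and eqL: "Lambda m th E \<alpha> \<xi> x = Lambda m th E \<alpha> \<xi> y"
  then obtain a b where a: "a \<in> Z1" and x: "x = B1 #>\<^bsub>ZG\<^esub> a" and b: "b \<in> Z1" and y: "y = B1 #>\<^bsub>ZG\<^esub> b"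
    unfolding carrier_ZMod by auto
  have ceq: "Inn #>\<^bsub>Aut\<^esub> sg a = Inn #>\<^bsub>Aut\<^esub> sg b" using eqL Lambda_coset[OF a] Lambda_coset[OF b] x y by simp
  have "sg a \<in> Inn #>\<^bsub>Aut\<^esub> sg b" using self_in_coset[OF ring_RR sg_Bij[OF a]] ceq by simp
  then obtain r where r: "r \<in> Units RR" and sa: "sg a = compose (carrier RR) (inn RR r) (sg b)"
    unfolding coset_eq[OF ring_RR sg_Bij[OF b]] by auto
  have rc: "r \<in> carrier RR" "inv\<^bsub>RR\<^esub> r \<in> carrier RR" using R.Units_closed[OF r] R.Units_inv_closed[OF r] by auto
  have comm: "mul r (delta e) = mul (delta e) r" if e: "e \<in> E" for e
  proof -
    have "delta e = sg a (delta e)" using sigma_delta[OF a e] by simp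
    also have "\<dots> = inn RR r (sg b (delta e))" using sa delta_carrier by (simp add: compose_eq)
    also have "\<dots> = r \<otimes>\<^bsub>RR\<^esub> delta e \<otimes>\<^bsub>RR\<^esub> inv\<^bsub>RR\<^esub> r"
      using sigma_delta[OF b e] delta_carrier by (simp add: inn_def)
    finally have 1: "delta e = r \<otimes>\<^bsub>RR\<^esub> delta e \<otimes>\<^bsub>RR\<^esub> inv\<^bsub>RR\<^esub> r" .
    have d: "delta e \<in> carrier RR" using delta_carrier by simp
    have "delta e \<otimes>\<^bsub>RR\<^esub> r = r \<otimes>\<^bsub>RR\<^esub> delta e \<otimes>\<^bsub>RR\<^esub> (inv\<^bsub>RR\<^esub> r \<otimes>\<^bsub>RR\<^esub> r)"
      using 1 rc d by (metis R.m_assoc R.m_closed)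
    also have "\<dots> = r \<otimes>\<^bsub>RR\<^esub> delta e"
    proof -
      have li: "mul (inv\<^bsub>RR\<^esub> r) r = one0" using R.Units_l_inv[OF r] by simp
      show ?thesis by (simp add: li mul_one0_right)
    qed
    finally show ?thesis by simp
  qed
  obtain \<epsilon> where e: "\<epsilon> \<in> NZ" and rd: "r = diag E \<epsilon>" using r_diag[OF r comm] by blast
  have "sg a = sg (Zm (cb \<epsilon>) b)" using sa rd sg_Zcb[OF e] by simp
  moreover have "normalz (Zm (cb \<epsilon>) b)"
    using Z1_normal[OF b] by (simp add: normalz_def Zm_eq cb_def)
  moreover have "\<And>e. e \<in> E \<Longrightarrow> fst (Zm (cb \<epsilon>) b) e 1 = 1"
    using e by (simp add: Zm_eq cb_fst_E autD_one[OF Z1_aut[OF b]] rho_def NZ_def)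
  ultimately have "a = Zm (cb \<epsilon>) b" using sigma_inj[OF a] by blast
  thus "x = y" using x y coset_cb[OF e] by simp
qed

end

theorem mainTheorem4:
  fixes m :: "'s \<Rightarrow> 's \<Rightarrow> 's" and th :: 's and E :: "'s set"
    and \<alpha> :: "'s \<Rightarrow> 'd::division_ring \<Rightarrow> 'd" and \<xi> :: "'s \<Rightarrow> 's \<Rightarrow> 'd"
  assumes "sqfree_sg m th E"
    and "cocycle2 m th \<alpha> \<xi>"
    and "normal_cocycle E \<alpha> \<xi>"
  shows "(\<forall>z\<in>Z1set m th E \<alpha> \<xi>. \<forall>z'\<in>Z1set m th E \<alpha> \<xi>.
            B1set m th E \<alpha> \<xi> #>\<^bsub>Z1grp m th E \<alpha> \<xi>\<^esub> z = B1set m th E \<alpha> \<xi> #>\<^bsub>Z1grp m th E \<alpha> \<xi>\<^esub> z' \<longrightarrow>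
            InnR (Rring m th \<alpha> \<xi>) #>\<^bsub>AutR (Rring m th \<alpha> \<xi>)\<^esub> sigma m th E (fst z) (snd z)
          = InnR (Rring m th \<alpha> \<xi>) #>\<^bsub>AutR (Rring m th \<alpha> \<xi>)\<^esub> sigma m th E (fst z') (snd z'))
       \<and> Lambda m th E \<alpha> \<xi> \<in> hom (Z1grp m th E \<alpha> \<xi> Mod B1set m th E \<alpha> \<xi>)
                                (AutR (Rring m th \<alpha> \<xi>) Mod InnR (Rring m th \<alpha> \<xi>))
       \<and> inj_on (Lambda m th E \<alpha> \<xi>) (carrier (Z1grp m th E \<alpha> \<xi> Mod B1set m th E \<alpha> \<xi>))"
proof -
  interpret S: SQ m th E \<alpha> \<xi> by (rule SQ.intro) (rule assms)+
  show ?thesis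
  proof (intro conjI ballI impI)
    fix z z' assume z: "z \<in> Z1set m th E \<alpha> \<xi>" and z': "z' \<in> Z1set m th E \<alpha> \<xi>"
      and eq: "B1set m th E \<alpha> \<xi> #>\<^bsub>Z1grp m th E \<alpha> \<xi>\<^esub> z = B1set m th E \<alpha> \<xi> #>\<^bsub>Z1grp m th E \<alpha> \<xi>\<^esub> z'"
    show "InnR (Rring m th \<alpha> \<xi>) #>\<^bsub>AutR (Rring m th \<alpha> \<xi>)\<^esub> sigma m th E (fst z) (snd z)
          = InnR (Rring m th \<alpha> \<xi>) #>\<^bsub>AutR (Rring m th \<alpha> \<xi>)\<^esub> sigma m th E (fst z') (snd z')"
      using S.Lambda_coset[OF z] S.Lambda_coset[OF z'] eq by simp
  next
    show "Lambda m th E \<alpha> \<xi> \<in> hom (Z1grp m th E \<alpha> \<xi> Mod B1set m th E \<alpha> \<xi>)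
                                (AutR (Rring m th \<alpha> \<xi>) Mod InnR (Rring m th \<alpha> \<xi>))"
      by (rule S.Lambda_hom)
  next
    show "inj_on (Lambda m th E \<alpha> \<xi>) (carrier (Z1grp m th E \<alpha> \<xi> Mod B1set m th E \<alpha> \<xi>))"
      by (rule S.Lambda_inj)
  qed
qed


end
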